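(* Let $\Gamma\in(0,1]$ and let $F$ be the cumulative distribution function of a nonnegative random variable such that $F(\Gamma)<1$ and, for some $\Gamma'>\Gamma$, $F$ has on $[0,\Gamma']$ a density $f$ that is differentiable with bounded derivative. Let $h_F(x)=f(x)/(1-F(x))$. For each $N\ge 2$ let $(B^N(t),D^N(t))_{t\ge 0}$ be the scaled HILT Markov chain described in the context, with $B^N(0)=0$ and $D^N(0)/N\to d_0\in(0,1]$ as $N\to\infty$, and put $\tilde B^N(t)=B^N(t)/N$, $\tilde D^N(t)=D^N(t)/N$. Then for every $T>0$ and every $\epsilon>0$, $$\mathbb{P}\Big(\sup_{0\le u\le T}\big\|(\tilde B^N(\lfloor Nu\rfloor),\tilde D^N(\lfloor Nu\rfloor))-(b(u),d(u))\big\|>\epsilon\Big)\xrightarrow{N\to\infty}0,$$ where $(b,d)$ is the unique solution of $$\dot b=d,\qquad \dot d=h_F(\Gamma b)\,\Gamma d\,(1-b-d)-d,$$ with $b(0)=0$, $d(0)=d_0$.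
   Context: HILT (Homogeneous Influence Linear Threshold) model: $N$ nodes; each node $i$ draws, once and for all, a threshold $\Theta_i$, the $\Theta_i$ being i.i.d. with c.d.f. $F$; every ordered pair of nodes carries influence weight $\gamma_N=\Gamma/(N-1)$. A relay (not yet interested node) becomes a destination (interested node) once $\gamma_N$ times the number of destinations whose influence has been counted is at least its threshold; this is irreversible. Scaled HILT Markov chain: $B^N(t)$ is the number of non-infectious destinations and $D^N(t)$ the number of infectious destinations at minislot $t$, with $B^N(t)+D^N(t)\le N$; the remaining $N-B^N(t)-D^N(t)$ nodes are relays. Given $(B^N(t),D^N(t))=(j,m)$: (i) each of the $m$ infectious destinations independently, with probability $1/N$, exerts its influence and becomes non-infectious; let $C$ be their number (so $C\sim\mathrm{Bin}(m,1/N)$); (ii) given $C=c$, each of the $N-j-m$ relays independently becomes an (infectious) destination with probability $\frac{F(\gamma_N(j+c))-F(\gamma_N j)}{1-F(\gamma_N j)}$; let $E$ be their number; (iii) $B^N(t+1)=j+c$, $D^N(t+1)=m-c+E$. *)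

theory Defs
  imports "HOL-Probability.Probability"
begin

definition gammaN :: "real \<Rightarrow> nat \<Rightarrow> real" where
  "gammaN \<Gamma> N = \<Gamma> / (real N - 1)"

text \<open>One minislot of the scaled HILT Markov chain. State (j, m): j non-infectious
  destinations, m infectious destinations, N - j - m relays.\<close>
definition hilt_step :: "(real \<Rightarrow> real) \<Rightarrow> real \<Rightarrow> nat \<Rightarrow> nat \<times> nat \<Rightarrow> (nat \<times> nat) pmf" where
  "hilt_step F \<Gamma> N s = (case s of (j, m) \<Rightarrow>
     do { c \<leftarrow> binomial_pmf m (1 / real N);
          e \<leftarrow> binomial_pmf (N - j - m)
                 ((F (gammaN \<Gamma> N * real (j + c)) - F (gammaN \<Gamma> N * real j))
                    / (1 - F (gammaN \<Gamma> N * real j)));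
          return_pmf (j + c, m - c + e) })"

fun hilt_path :: "(real \<Rightarrow> real) \<Rightarrow> real \<Rightarrow> nat \<Rightarrow> nat \<times> nat \<Rightarrow> nat \<Rightarrow> (nat \<times> nat) list pmf" where
  "hilt_path F \<Gamma> N s0 0 = return_pmf [s0]"
| "hilt_path F \<Gamma> N s0 (Suc n) =
     bind_pmf (hilt_path F \<Gamma> N s0 n) (\<lambda>xs. map_pmf (\<lambda>s. xs @ [s]) (hilt_step F \<Gamma> N (last xs)))"

definition hazard :: "(real \<Rightarrow> real) \<Rightarrow> (real \<Rightarrow> real) \<Rightarrow> real \<Rightarrow> real" where
  "hazard F f x = f x / (1 - F x)"

definition hilt_ode_sol :: "(real \<Rightarrow> real) \<Rightarrow> (real \<Rightarrow> real) \<Rightarrow> real \<Rightarrow> real \<Rightarrow>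
    (real \<Rightarrow> real) \<Rightarrow> (real \<Rightarrow> real) \<Rightarrow> bool" where
  "hilt_ode_sol F f \<Gamma> d0 b d \<longleftrightarrow> b 0 = 0 \<and> d 0 = d0 \<and>
     (\<forall>u\<ge>0. (b has_real_derivative d u) (at u within {0..}) \<and>
            (d has_real_derivative
               (hazard F f (\<Gamma> * b u) * \<Gamma> * d u * (1 - b u - d u) - d u)) (at u within {0..}))"

end

theory Submission
  imports Defs
begin

locale hiltF =
  fixes M :: "real measure" and F f f' :: "real \<Rightarrow> real" and \<Gamma> \<Gamma>' d0 :: real
  assumes M: "real_distribution M" and F_def: "F = cdf M"
    and \<Gamma>: "0 < \<Gamma>" "\<Gamma> \<le> 1" and F\<Gamma>: "F \<Gamma> < 1" and \<Gamma>': "\<Gamma> < \<Gamma>'"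
    and dens: "\<forall>x\<in>{0..\<Gamma>'}. (f has_integral F x) {0..x}"
    and fderiv: "\<forall>x\<in>{0..\<Gamma>'}. (f has_real_derivative f' x) (at x within {0..\<Gamma>'})"
    and fbdd: "\<exists>K. \<forall>x\<in>{0..\<Gamma>'}. \<bar>f' x\<bar> \<le> K"
    and d0: "0 < d0" "d0 \<le> 1"
begin

lemma F_mono: "x \<le> y \<Longrightarrow> F x \<le> F y"
proof -
  interpret real_distribution M by (rule M)
  show "x \<le> y \<Longrightarrow> F x \<le> F y" unfolding F_def by (rule cdf_nondecreasing)
qed

lemma F_nonneg: "0 \<le> F x"
proof -
  interpret real_distribution M by (rule M)
  show ?thesis unfolding F_def by (rule cdf_nonneg)
qed

lemma F_le1: "F x \<le> 1"
  using M unfolding F_def by (simp add: real_distribution.cdf_bounded_prob)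

lemma f_cont: "continuous_on {0..\<Gamma>'} f"
proof -
  have "\<And>x. x \<in> {0..\<Gamma>'} \<Longrightarrow> continuous (at x within {0..\<Gamma>'}) f"
    using fderiv by (meson DERIV_continuous)
  then show ?thesis by (simp add: continuous_on_eq_continuous_within)
qed

lemma F_eq_int: "x \<in> {0..\<Gamma>'} \<Longrightarrow> F x = integral {0..x} f"
  using dens by (metis integral_unique)

lemma F0: "F 0 = 0"
  using F_eq_int[of 0] \<Gamma> \<Gamma>' by simp

lemma F_deriv: assumes "x \<in> {0..\<Gamma>'}" shows "(F has_real_derivative f x) (at x within {0..\<Gamma>'})"
proof -
  have "((\<lambda>u. integral {0..u} f) has_vector_derivative f x) (at x within {0..\<Gamma>'})"
    by (rule integral_has_vector_derivative[OF f_cont assms])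
  then have "((\<lambda>u. integral {0..u} f) has_real_derivative f x) (at x within {0..\<Gamma>'})"
    by (simp add: has_real_derivative_iff_has_vector_derivative)
  then show ?thesis
    unfolding has_field_derivative_def
    using has_derivative_transform[OF assms, of F "\<lambda>u. integral {0..u} f"] F_eq_int by blast
qed

lemma F_cont: "continuous_on {0..\<Gamma>'} F"
proof -
  have "\<And>x. x \<in> {0..\<Gamma>'} \<Longrightarrow> continuous (at x within {0..\<Gamma>'}) F"
    using F_deriv by (meson DERIV_continuous)
  then show ?thesis by (simp add: continuous_on_eq_continuous_within)
qed

definition Kf' :: real where "Kf' = (SOME K. \<forall>x\<in>{0..\<Gamma>'}. \<bar>f' x\<bar> \<le> K)"
lemma Kf': "x \<in> {0..\<Gamma>'} \<Longrightarrow> \<bar>f' x\<bar> \<le> Kf'"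
  using someI_ex[OF fbdd] unfolding Kf'_def by blast

definition Bf :: real where "Bf = (SOME B. \<forall>x\<in>{0..\<Gamma>'}. \<bar>f x\<bar> \<le> B)"
lemma Bf: "x \<in> {0..\<Gamma>'} \<Longrightarrow> \<bar>f x\<bar> \<le> Bf"
proof -
  have "compact (f ` {0..\<Gamma>'})" by (intro compact_continuous_image f_cont) auto
  then obtain B where "\<forall>y\<in>f ` {0..\<Gamma>'}. norm y \<le> B"
    using compact_imp_bounded bounded_iff by metis
  then have "\<exists>B. \<forall>x\<in>{0..\<Gamma>'}. \<bar>f x\<bar> \<le> B" by auto
  from someI_ex[OF this] show "x \<in> {0..\<Gamma>'} \<Longrightarrow> \<bar>f x\<bar> \<le> Bf" unfolding Bf_def by blast
qed

lemma Bf_nonneg: "0 \<le> Bf" using Bf[of 0] \<Gamma> \<Gamma>' by auto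
lemma Kf'_nonneg: "0 \<le> Kf'" using Kf'[of 0] \<Gamma> \<Gamma>' by auto

lemma f_lip: "x \<in> {0..\<Gamma>'} \<Longrightarrow> y \<in> {0..\<Gamma>'} \<Longrightarrow> \<bar>f x - f y\<bar> \<le> Kf' * \<bar>x - y\<bar>"
  using field_differentiable_bound[of "{0..\<Gamma>'}" f f' Kf' x y] fderiv Kf' by auto

lemma F_lip: "x \<in> {0..\<Gamma>'} \<Longrightarrow> y \<in> {0..\<Gamma>'} \<Longrightarrow> \<bar>F x - F y\<bar> \<le> Bf * \<bar>x - y\<bar>"
  using field_differentiable_bound[of "{0..\<Gamma>'}" F f Bf x y] F_deriv Bf by auto

lemma F_taylor:
  assumes "0 \<le> x" "x \<le> y" "y \<le> \<Gamma>'"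
  shows "\<bar>F y - F x - f x * (y - x)\<bar> \<le> Kf' * (y - x)^2"
proof -
  let ?g = "\<lambda>t. F t - f x * t"
  have d: "(?g has_real_derivative (f t - f x)) (at t within {x..y})" if "t \<in> {x..y}" for t
  proof -
    have "(F has_real_derivative f t) (at t within {0..\<Gamma>'})" using that assms by (intro F_deriv) auto
    then have "(F has_real_derivative f t) (at t within {x..y})"
      by (rule has_field_derivative_subset) (use assms in auto)
    then show ?thesis by (auto intro!: derivative_eq_intros)
  qed
  have b: "norm (f t - f x) \<le> Kf' * (y - x)" if "t \<in> {x..y}" for t
    using f_lip[of t x] that assms Kf'_nonneg
    by (auto intro: order.trans[OF _ mult_left_mono[of "\<bar>t - x\<bar>" "y - x" Kf']])
  have "norm (?g y - ?g x) \<le> Kf' * (y - x) * norm (y - x)"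
    by (rule field_differentiable_bound[OF _ d b]) (use assms in auto)
  then show ?thesis using assms by (simp add: algebra_simps power2_eq_square)
qed

lemma exists_G2: "\<exists>G2. \<Gamma> < G2 \<and> G2 < \<Gamma>' \<and> F G2 < 1"
proof -
  have "continuous (at \<Gamma> within {0..\<Gamma>'}) F"
    using F_cont \<Gamma> \<Gamma>' by (simp add: continuous_on_eq_continuous_within)
  then obtain \<delta> where \<delta>: "\<delta> > 0" "\<And>x. x \<in> {0..\<Gamma>'} \<Longrightarrow> dist x \<Gamma> < \<delta> \<Longrightarrow> dist (F x) (F \<Gamma>) < (1 - F \<Gamma>)/2"
    unfolding continuous_within_eps_delta using F\<Gamma> by (metis diff_gt_0_iff_gt half_gt_zero)
  define G2 where "G2 = min (\<Gamma> + \<delta>/2) ((\<Gamma> + \<Gamma>')/2)"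
  have "G2 \<in> {0..\<Gamma>'}" "dist G2 \<Gamma> < \<delta>" using \<delta> \<Gamma> \<Gamma>' unfolding G2_def dist_real_def by (auto simp: min_def)
  then have "dist (F G2) (F \<Gamma>) < (1 - F \<Gamma>)/2" by (rule \<delta>(2))
  then have "F G2 < 1" using F\<Gamma> unfolding dist_real_def abs_less_iff by argo
  moreover have "\<Gamma> < G2" "G2 < \<Gamma>'" using \<delta> \<Gamma>' unfolding G2_def by (auto simp: min_def)
  ultimately show ?thesis by blast
qed

definition G2 :: real where "G2 = (SOME G2. \<Gamma> < G2 \<and> G2 < \<Gamma>' \<and> F G2 < 1)"
lemma G2: "\<Gamma> < G2" "G2 < \<Gamma>'" "F G2 < 1"
  using someI_ex[OF exists_G2] unfolding G2_def by auto

definition \<kappa> :: real where "\<kappa> = 1 - F G2"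
lemma \<kappa>_pos: "0 < \<kappa>" using G2 unfolding \<kappa>_def by simp
lemma \<kappa>_le1: "\<kappa> \<le> 1" using F_nonneg unfolding \<kappa>_def by simp

lemma one_minus_F_ge: "x \<le> G2 \<Longrightarrow> \<kappa> \<le> 1 - F x"
  using F_mono[of x G2] unfolding \<kappa>_def by simp

abbreviation h where "h \<equiv> hazard F f"

definition Bh :: real where "Bh = Bf / \<kappa>"
definition Lh :: real where "Lh = (Kf' + Bf^2) / \<kappa>^2"

lemma Bh_nonneg: "0 \<le> Bh" using Bf_nonneg \<kappa>_pos unfolding Bh_def by simp
lemma Lh_nonneg: "0 \<le> Lh" using Bf_nonneg Kf'_nonneg \<kappa>_pos unfolding Lh_def by simp

lemma h_bound: assumes "0 \<le> x" "x \<le> G2" shows "\<bar>h x\<bar> \<le> Bh"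
proof -
  have k: "\<kappa> \<le> 1 - F x" by (rule one_minus_F_ge) fact
  have "\<bar>f x\<bar> \<le> Bf" using Bf assms G2 by auto
  then have "\<bar>f x\<bar> / (1 - F x) \<le> Bf / \<kappa>"
    using k \<kappa>_pos Bf_nonneg by (intro frac_le) auto
  then show ?thesis unfolding hazard_def Bh_def using k \<kappa>_pos by (simp add: abs_div)
qed

lemma h_lip: assumes "0 \<le> x" "x \<le> G2" "0 \<le> y" "y \<le> G2" shows "\<bar>h x - h y\<bar> \<le> Lh * \<bar>x - y\<bar>"
proof -
  have kx: "\<kappa> \<le> 1 - F x" and ky: "\<kappa> \<le> 1 - F y" using assms by (auto intro: one_minus_F_ge)
  have xi: "x \<in> {0..\<Gamma>'}" and yi: "y \<in> {0..\<Gamma>'}" using assms G2 by auto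
  have fl: "\<bar>f x - f y\<bar> \<le> Kf' * \<bar>x - y\<bar>" by (rule f_lip[OF xi yi])
  have Fl: "\<bar>F x - F y\<bar> \<le> Bf * \<bar>x - y\<bar>" by (rule F_lip[OF xi yi])
  have fy: "\<bar>f y\<bar> \<le> Bf" using Bf yi by auto
  have fx: "\<bar>f x\<bar> \<le> Bf" using Bf xi by auto
  have px: "0 < 1 - F x" and py: "0 < 1 - F y" using kx ky \<kappa>_pos by auto
  have eq: "h x - h y = ((f x - f y) * (1 - F y) + f y * (F x - F y)) / ((1 - F x) * (1 - F y))"
    unfolding hazard_def using px py by (simp add: field_simps)
  have num: "\<bar>(f x - f y) * (1 - F y) + f y * (F x - F y)\<bar> \<le> (Kf' + Bf^2) * \<bar>x - y\<bar>"
  proof -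
    have "\<bar>(f x - f y) * (1 - F y)\<bar> \<le> Kf' * \<bar>x - y\<bar> * 1"
      unfolding abs_mult using fl py F_nonneg[of y]
      by (intro mult_mono) auto
    moreover have "\<bar>f y * (F x - F y)\<bar> \<le> Bf * (Bf * \<bar>x - y\<bar>)"
      unfolding abs_mult using fy Fl Bf_nonneg by (intro mult_mono) auto
    ultimately show ?thesis by (simp add: algebra_simps power2_eq_square abs_triangle_ineq[THEN order_trans])
  qed
  have den: "\<kappa>^2 \<le> (1 - F x) * (1 - F y)"
    unfolding power2_eq_square using kx ky \<kappa>_pos by (intro mult_mono) auto
  have "\<bar>h x - h y\<bar> = \<bar>(f x - f y) * (1 - F y) + f y * (F x - F y)\<bar> / ((1 - F x) * (1 - F y))"
    unfolding eq using px py by (simp add: abs_div)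
  also have "\<dots> \<le> (Kf' + Bf^2) * \<bar>x - y\<bar> / \<kappa>^2"
    using num den \<kappa>_pos Bf_nonneg Kf'_nonneg by (intro frac_le) auto
  finally show ?thesis unfolding Lh_def by simp
qed

end

lemma within_nonpos_mono:
  fixes g g' :: "real \<Rightarrow> real"
  assumes "a \<le> b" and d: "\<And>x. x \<in> {a..b} \<Longrightarrow> (g has_real_derivative g' x) (at x within {a..b})"
    and n: "\<And>x. x \<in> {a..b} \<Longrightarrow> g' x \<le> 0"
  shows "g b \<le> g a"
proof (rule DERIV_nonpos_imp_decreasing_open[OF assms(1)])
  fix x assume x: "a < x" "x < b"
  then have "x \<in> interior {a..b}" by auto
  then have "at x within {a..b} = at x" by (rule at_within_interior)
  then show "\<exists>y. (g has_real_derivative y) (at x) \<and> y \<le> 0" using d[of x] n[of x] x by auto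
next
  show "continuous_on {a..b} g"
    using d by (meson DERIV_continuous continuous_on_eq_continuous_within)
qed

lemma gronwall0:
  fixes g g' :: "real \<Rightarrow> real"
  assumes "0 \<le> V" and d: "\<And>x. x \<in> {0..V} \<Longrightarrow> (g has_real_derivative g' x) (at x within {0..V})"
    and le: "\<And>x. x \<in> {0..V} \<Longrightarrow> g' x \<le> C * g x" and g0: "g 0 = 0"
    and x: "x \<in> {0..V}"
  shows "g x \<le> 0"
proof -
  let ?k = "\<lambda>x. g x * exp (- C * x)"
  have dk: "(?k has_real_derivative (g' x - C * g x) * exp (- C * x)) (at x within {0..x})"
    if "x \<in> {0..V}" for x
  proof -
    have "(g has_real_derivative g' x) (at x within {0..x})"
      by (rule has_field_derivative_subset[OF d[OF that]]) (use that in auto)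
    then show ?thesis by (auto intro!: derivative_eq_intros simp: algebra_simps)
  qed
  have "?k x \<le> ?k 0"
  proof (rule within_nonpos_mono[of 0 x ?k "\<lambda>y. (g' y - C * g y) * exp (- C * y)"])
    fix y assume y: "y \<in> {0..x}"
    then have yV: "y \<in> {0..V}" using x by auto
    have "(?k has_real_derivative (g' y - C * g y) * exp (- C * y)) (at y within {0..y})"
      by (rule dk[OF yV])
    have "(g has_real_derivative g' y) (at y within {0..x})"
      by (rule has_field_derivative_subset[OF d[OF yV]]) (use x y in auto)
    then show "(?k has_real_derivative (g' y - C * g y) * exp (- C * y)) (at y within {0..x})"
      by (auto intro!: derivative_eq_intros simp: algebra_simps)
    show "(g' y - C * g y) * exp (- C * y) \<le> 0"
      using le[OF yV] by (simp add: mult_nonpos_nonneg)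
  qed (use x in auto)
  then have "g x * exp (- C * x) \<le> 0" using g0 by simp
  then show ?thesis by (simp add: mult_le_0_iff)
qed

context hiltF begin

definition clamp :: "real \<Rightarrow> real" where "clamp y = max 0 (min 1 y)"
definition phi :: "real \<Rightarrow> real" where "phi y = 1 - y - (1 - d0) * (1 - F (\<Gamma> * y))"
definition phic :: "real \<Rightarrow> real" where "phic y = phi (clamp y)"
definition Lphi :: real where "Lphi = 1 + \<Gamma> * Bf"

lemma clamp_in: "clamp y \<in> {0..1}" unfolding clamp_def by auto
lemma clamp_id: "y \<in> {0..1} \<Longrightarrow> clamp y = y" unfolding clamp_def by auto
lemma clamp_lip: "\<bar>clamp x - clamp y\<bar> \<le> \<bar>x - y\<bar>" unfolding clamp_def by auto

lemma Lphi_ge1: "1 \<le> Lphi" unfolding Lphi_def using \<Gamma> Bf_nonneg by simp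

lemma phi_lip: assumes "x \<in> {0..1}" "y \<in> {0..1}" shows "\<bar>phi x - phi y\<bar> \<le> Lphi * \<bar>x - y\<bar>"
proof -
  have i: "\<Gamma> * x \<in> {0..\<Gamma>'}" "\<Gamma> * y \<in> {0..\<Gamma>'}" using assms \<Gamma> \<Gamma>'
    by (auto intro: order.trans[OF mult_right_le_one_le[of \<Gamma> x]] order.trans[OF mult_right_le_one_le[of \<Gamma> y]])
  have "\<bar>F (\<Gamma> * x) - F (\<Gamma> * y)\<bar> \<le> Bf * \<bar>\<Gamma> * x - \<Gamma> * y\<bar>" by (rule F_lip[OF i])
  also have "\<dots> = Bf * \<Gamma> * \<bar>x - y\<bar>" using \<Gamma> by (simp add: abs_mult right_diff_distrib[symmetric])
  finally have Fl: "\<bar>F (\<Gamma> * x) - F (\<Gamma> * y)\<bar> \<le> Bf * \<Gamma> * \<bar>x - y\<bar>" .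
  have "phi x - phi y = -(x - y) + (1 - d0) * (F (\<Gamma> * x) - F (\<Gamma> * y))"
    unfolding phi_def by (simp add: algebra_simps)
  moreover have "\<bar>(1 - d0) * (F (\<Gamma> * x) - F (\<Gamma> * y))\<bar> = (1 - d0) * \<bar>F (\<Gamma> * x) - F (\<Gamma> * y)\<bar>"
    using d0 by (simp add: abs_mult)
  ultimately have "\<bar>phi x - phi y\<bar> \<le> \<bar>x - y\<bar> + (1 - d0) * \<bar>F (\<Gamma> * x) - F (\<Gamma> * y)\<bar>"
    by (metis abs_minus_cancel abs_triangle_ineq)
  also have "\<dots> \<le> \<bar>x - y\<bar> + 1 * (Bf * \<Gamma> * \<bar>x - y\<bar>)"
    using Fl d0 by (intro add_left_mono mult_mono) auto
  finally show ?thesis unfolding Lphi_def by (simp add: algebra_simps)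
qed

lemma phic_lip: "\<bar>phic x - phic y\<bar> \<le> Lphi * \<bar>x - y\<bar>"
proof -
  have "\<bar>phic x - phic y\<bar> \<le> Lphi * \<bar>clamp x - clamp y\<bar>"
    unfolding phic_def by (rule phi_lip[OF clamp_in clamp_in])
  also have "\<dots> \<le> Lphi * \<bar>x - y\<bar>" using Lphi_ge1 clamp_lip by (intro mult_left_mono) auto
  finally show ?thesis .
qed

lemma phic_cont: "continuous_on S phic"
proof -
  have "continuous_on UNIV phic"
    unfolding continuous_on_iff
  proof (intro ballI allI impI)
    fix x e :: real assume "0 < e"
    have Lp: "0 < Lphi" using Lphi_ge1 by simp
    have "dist (phic x') (phic x) < e" if "dist x' x < e / Lphi" for x'
    proof -
      have "\<bar>phic x' - phic x\<bar> \<le> Lphi * \<bar>x' - x\<bar>" by (rule phic_lip)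
      also have "\<dots> < Lphi * (e / Lphi)" using that Lp unfolding dist_real_def
        by (intro mult_strict_left_mono) auto
      also have "\<dots> = e" using Lp by simp
      finally show ?thesis unfolding dist_real_def .
    qed
    then show "\<exists>d>0. \<forall>x'\<in>UNIV. dist x' x < d \<longrightarrow> dist (phic x') (phic x) < e"
      using Lp \<open>0 < e\<close> by (intro exI[of _ "e / Lphi"]) auto
  qed
  then show ?thesis by (rule continuous_on_subset) auto
qed

lemma phic_isCont: "isCont phic x"
  using phic_cont[of UNIV] by (simp add: continuous_on_eq_continuous_at)

lemma phic_neg: "y \<le> 0 \<Longrightarrow> phic y = d0"
  unfolding phic_def clamp_def phi_def using F0 by (simp add: max_def)

lemma phic_1: "phic 1 \<le> 0"
  unfolding phic_def clamp_def phi_def using d0 F\<Gamma> by (simp add: mult_nonneg_nonneg)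

definition bs :: real where "bs = Inf {y\<in>{0..1}. phic y \<le> 0}"

lemma bs_props: "0 < bs" "bs \<le> 1" "phic bs \<le> 0" "\<And>y. y < bs \<Longrightarrow> 0 < phic y"
proof -
  let ?Z = "{y\<in>{0..1}. phic y \<le> 0}"
  have cl: "closed ?Z"
  proof -
    have "closed ({0..1} \<inter> phic -` {..0})"
      by (rule continuous_closed_preimage[OF phic_cont]) auto
    moreover have "{0..1} \<inter> phic -` {..0} = ?Z" by auto
    ultimately show ?thesis by simp
  qed
  have ne: "?Z \<noteq> {}" using phic_1 by auto
  have bd: "bdd_below ?Z" by (auto intro: bdd_belowI[of _ 0])
  have inZ: "bs \<in> ?Z" unfolding bs_def by (rule closed_contains_Inf[OF ne bd cl])
  then show "bs \<le> 1" "phic bs \<le> 0" by auto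
  have lt: "0 < phic y" if "y < bs" for y
  proof (cases "y < 0")
    case True then show ?thesis using phic_neg d0 by simp
  next
    case False
    have "y \<notin> ?Z" using that cInf_lower[OF _ bd, of y] unfolding bs_def by force
    then show ?thesis using False that \<open>bs \<le> 1\<close> by auto
  qed
  then show "\<And>y. y < bs \<Longrightarrow> 0 < phic y" by blast
  show "0 < bs"
  proof (rule ccontr)
    assume "\<not> 0 < bs"
    then have "bs = 0" using inZ by auto
    then show False using \<open>phic bs \<le> 0\<close> phic_neg[of 0] d0 by simp
  qed
qed

lemma phic_upper: assumes "y \<le> bs" shows "phic y \<le> Lphi * (bs - y)"
proof -
  have "phic y - phic bs \<le> Lphi * \<bar>y - bs\<bar>" using phic_lip[of y bs] by linarith
  moreover have "\<bar>y - bs\<bar> = bs - y" using assms by simp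
  ultimately show ?thesis using bs_props(3) by simp
qed

definition psi :: "real \<Rightarrow> real" where "psi y = 1 / phic y"
definition Tf :: "real \<Rightarrow> real" where "Tf y = integral {-1..y} psi"

lemma psi_pos: "y < bs \<Longrightarrow> 0 < psi y"
  unfolding psi_def using bs_props(4) by simp

lemma Tf_deriv: assumes "-1 < y" "y < bs" shows "(Tf has_real_derivative psi y) (at y)"
proof -
  define c where "c = (y + bs) / 2"
  have yc: "y < c" "c < bs" using assms unfolding c_def by auto
  have nz: "\<forall>x\<in>{-1..c}. phic x \<noteq> 0"
  proof
    fix x assume "x \<in> {-1..c}"
    then have "x < bs" using yc by auto
    then show "phic x \<noteq> 0" using bs_props(4)[of x] by linarith
  qed
  have "continuous_on {-1..c} (\<lambda>x. 1 / phic x)"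
    by (rule continuous_on_divide[OF continuous_on_const phic_cont nz])
  then have cont: "continuous_on {-1..c} psi" unfolding psi_def[abs_def] .
  have yin: "y \<in> {-1..c}" using assms yc by auto
  have "(Tf has_vector_derivative psi y) (at y within {-1..c})"
    unfolding Tf_def[abs_def] by (rule integral_has_vector_derivative[OF cont yin])
  moreover have "y \<in> interior {-1..c}" using assms yc by simp
  then have "at y within {-1..c} = at y" by (rule at_within_interior)
  ultimately have "(Tf has_vector_derivative psi y) (at y)" by simp
  then show ?thesis by (simp add: has_real_derivative_iff_has_vector_derivative)
qed

lemma Tf_isCont: "-1 < y \<Longrightarrow> y < bs \<Longrightarrow> isCont Tf y"
  using Tf_deriv DERIV_isCont by blast

lemma Tf_strict: assumes "-1 < x" "x < y" "y < bs" shows "Tf x < Tf y"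
proof (rule DERIV_pos_imp_increasing[OF assms(2)])
  fix z assume "x \<le> z" "z \<le> y"
  then have "-1 < z" "z < bs" using assms by auto
  then show "\<exists>d. (Tf has_real_derivative d) (at z) \<and> 0 < d"
    using Tf_deriv psi_pos by blast
qed

lemma Tf_inj: assumes "-1 < x" "x < bs" "-1 < y" "y < bs" "Tf x = Tf y" shows "x = y"
  using Tf_strict[of x y] Tf_strict[of y x] assms by (cases x y rule: linorder_cases) auto

lemma Tf_lower: assumes "0 \<le> y" "y < bs" shows "(ln bs - ln (bs - y)) / Lphi \<le> Tf y - Tf 0"
proof -
  let ?g = "\<lambda>x. Tf x - Tf 0 - (ln bs - ln (bs - x)) / Lphi"
  have Lp: "0 < Lphi" using Lphi_ge1 by simp
  have "?g 0 \<le> ?g y"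
  proof (rule DERIV_nonneg_imp_nondecreasing[OF assms(1)])
    fix x assume x: "0 \<le> x" "x \<le> y"
    then have xb: "x < bs" "-1 < x" using assms by auto
    have "(?g has_real_derivative psi x - 0 - (0 - (- 1) / (bs - x)) / Lphi) (at x)"
      using Tf_deriv[OF xb(2) xb(1)] xb Lp
      by (intro derivative_eq_intros) auto
    moreover have "psi x - 0 - (0 - (- 1) / (bs - x)) / Lphi = psi x - 1 / ((bs - x) * Lphi)"
      by simp
    ultimately have "(?g has_real_derivative psi x - 1 / ((bs - x) * Lphi)) (at x)" by simp
    moreover have "1 / ((bs - x) * Lphi) \<le> psi x"
    proof -
      have "0 < phic x" using bs_props(4) xb by simp
      moreover have "phic x \<le> Lphi * (bs - x)" using phic_upper xb by simp
      ultimately show ?thesis unfolding psi_def by (intro frac_le) (auto simp: mult.commute)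
    qed
    ultimately show "\<exists>d. (?g has_real_derivative d) (at x) \<and> 0 \<le> d"
      by (intro exI[of _ "psi x - 1 / ((bs - x) * Lphi)"]) simp
  qed
  then show ?thesis by simp
qed

lemma Tf_hit: assumes "Tf (-1/2) - Tf 0 < v" shows "\<exists>y. -1/2 \<le> y \<and> y < bs \<and> Tf y = Tf 0 + v"
proof (cases "0 \<le> v")
  case True
  have Lp: "0 < Lphi" using Lphi_ge1 by simp
  define y1 where "y1 = bs - bs * exp (- Lphi * v)"
  have bpos: "0 < bs" using bs_props(1) .
  have e: "exp (- Lphi * v) \<le> 1" "0 < exp (- Lphi * v)" using True Lp by auto
  have y1: "0 \<le> y1" "y1 < bs" unfolding y1_def using e bpos
    by (simp_all add: mult_le_cancel_left1)
  have "bs - y1 = bs * exp (- Lphi * v)" unfolding y1_def by simp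
  then have "ln (bs - y1) = ln bs - Lphi * v" using bpos by (simp add: ln_mult)
  then have "(ln bs - ln (bs - y1)) / Lphi = v" using Lp by simp
  then have hi: "Tf 0 + v \<le> Tf y1" using Tf_lower[OF y1] by simp
  have "\<exists>x. 0 \<le> x \<and> x \<le> y1 \<and> Tf x = Tf 0 + v"
  proof (rule IVT[of Tf 0 "Tf 0 + v" y1])
    show "Tf 0 \<le> Tf 0 + v" using True by simp
    show "\<forall>x. 0 \<le> x \<and> x \<le> y1 \<longrightarrow> isCont Tf x"
    proof (intro allI impI)
      fix x assume "0 \<le> x \<and> x \<le> y1"
      then show "isCont Tf x" using y1 by (intro Tf_isCont) auto
    qed
  qed (use hi y1 in auto)
  then obtain x where "0 \<le> x" "x \<le> y1" "Tf x = Tf 0 + v" by blast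
  then show ?thesis using y1 by (intro exI[of _ x]) auto
next
  case False
  have "\<exists>x. -1/2 \<le> x \<and> x \<le> 0 \<and> Tf x = Tf 0 + v"
  proof (rule IVT[of Tf "-1/2" "Tf 0 + v" 0])
    show "\<forall>x::real. -1/2 \<le> x \<and> x \<le> 0 \<longrightarrow> isCont Tf x"
    proof (intro allI impI)
      fix x :: real assume "-1/2 \<le> x \<and> x \<le> 0"
      then show "isCont Tf x" using bs_props(1) by (intro Tf_isCont) auto
    qed
  qed (use False assms in auto)
  then obtain x where "-1/2 \<le> x" "x \<le> 0" "Tf x = Tf 0 + v" by blast
  then show ?thesis using bs_props(1) by (intro exI[of _ x]) auto
qed

definition beta :: "real \<Rightarrow> real" where "beta v = (THE y. -1 < y \<and> y < bs \<and> Tf y = Tf 0 + v)"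

lemma beta: assumes "Tf (-1/2) - Tf 0 < v"
  shows "-1/2 \<le> beta v" "beta v < bs" "Tf (beta v) = Tf 0 + v"
proof -
  obtain y where y: "-1/2 \<le> y" "y < bs" "Tf y = Tf 0 + v" using Tf_hit[OF assms] by blast
  have "beta v = y" unfolding beta_def
    by (rule the_equality) (use y Tf_inj in auto)
  then show "-1/2 \<le> beta v" "beta v < bs" "Tf (beta v) = Tf 0 + v" using y by auto
qed

lemma beta_eq: assumes "-1 < y" "y < bs" shows "beta (Tf y - Tf 0) = y"
  unfolding beta_def by (rule the_equality) (use assms Tf_inj in auto)

lemma a0: "Tf (-1/2) - Tf 0 < 0"
  using Tf_strict[of "-1/2" 0] bs_props(1) by simp

lemma beta0: "beta 0 = 0" using beta_eq[of 0] bs_props(1) by simp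

lemma beta_nonneg: assumes "0 \<le> u" shows "0 \<le> beta u" "beta u < bs"
proof -
  have b: "-1/2 \<le> beta u" "beta u < bs" "Tf (beta u) = Tf 0 + u" using beta[of u] a0 assms by auto
  show "beta u < bs" by fact
  show "0 \<le> beta u"
  proof (rule ccontr)
    assume "\<not> 0 \<le> beta u"
    then have "Tf (beta u) < Tf 0" using Tf_strict[of "beta u" 0] b bs_props(1) by auto
    then show False using b assms by simp
  qed
qed

lemma beta_deriv: assumes "Tf (-1/2) - Tf 0 < u" shows "(beta has_real_derivative phic (beta u)) (at u)"
proof -
  let ?f = "\<lambda>z. Tf z - Tf 0"
  define x where "x = beta u"
  have bx: "-1/2 \<le> x" "x < bs" "?f x = u" using beta[OF assms] unfolding x_def by auto
  define d where "d = min (1/4) ((bs - x)/2)"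
  have d: "0 < d" using bx unfolding d_def by auto
  have zin: "-1 < z \<and> z < bs" if "\<bar>z - x\<bar> \<le> d" for z
  proof -
    have "\<bar>z - x\<bar> \<le> 1/4" "\<bar>z - x\<bar> \<le> (bs - x)/2" using that unfolding d_def by auto
    then show ?thesis using bx unfolding abs_le_iff by argo
  qed
  have cont: "isCont beta (?f x)"
  proof (rule isCont_inverse_function[OF d, where f = ?f and x = x and g = beta])
    fix z assume "\<bar>z - x\<bar> \<le> d"
    then show "beta (?f z) = z" using zin beta_eq by blast
  next
    fix z assume "\<bar>z - x\<bar> \<le> d"
    then have "-1 < z" "z < bs" using zin by auto
    then have "isCont Tf z" by (rule Tf_isCont)
    then show "isCont ?f z" by (intro continuous_intros)
  qed
  have "DERIV beta u :> inverse (psi x)"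
  proof (rule DERIV_inverse_function[where f = ?f and a = "Tf (-1/2) - Tf 0" and b = "u + 1"])
    show "DERIV ?f (beta u) :> psi x"
      using Tf_deriv[of x] bx unfolding x_def by (auto intro!: derivative_eq_intros)
    show "psi x \<noteq> 0" using psi_pos bx by (metis less_irrefl)
    show "Tf (-1/2) - Tf 0 < u" "u < u + 1" by (fact assms) simp
    fix y assume "Tf (-1/2) - Tf 0 < y" "y < u + 1"
    then show "?f (beta y) = y" using beta(3) by simp
  next
    show "isCont beta u" using cont bx by simp
  qed
  then show ?thesis unfolding x_def psi_def by simp
qed

end

context hiltF begin

lemma beta_range: assumes "0 \<le> u" shows "beta u \<in> {0..1}" "\<Gamma> * beta u \<in> {0..\<Gamma>'}" "\<Gamma> * beta u \<le> G2"
proof -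
  have b: "0 \<le> beta u" "beta u < bs" by (rule beta_nonneg[OF assms])+
  then show bi: "beta u \<in> {0..1}" using bs_props(2) by auto
  have g: "\<Gamma> * beta u \<le> \<Gamma>" using bi \<Gamma> by (simp add: mult_left_le)
  have "0 \<le> \<Gamma> * beta u" using b \<Gamma> by simp
  then show "\<Gamma> * beta u \<in> {0..\<Gamma>'}" "\<Gamma> * beta u \<le> G2" using g \<Gamma>' G2 by auto
qed

lemma phic_in: "y \<in> {0..1} \<Longrightarrow> phic y = 1 - y - (1 - d0) * (1 - F (\<Gamma> * y))"
  unfolding phic_def phi_def by (simp add: clamp_id)

lemma F_chain:
  assumes bd: "(b has_real_derivative b') (at u within S)"
    and img: "\<And>v. v \<in> S \<Longrightarrow> \<Gamma> * b v \<in> {0..\<Gamma>'}" and u: "u \<in> S"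
  shows "((\<lambda>v. F (\<Gamma> * b v)) has_real_derivative f (\<Gamma> * b u) * (\<Gamma> * b')) (at u within S)"
proof -
  have g: "((\<lambda>v. \<Gamma> * b v) has_real_derivative \<Gamma> * b') (at u within S)"
    using bd by (auto intro!: derivative_eq_intros)
  have "(F has_real_derivative f (\<Gamma> * b u)) (at (\<Gamma> * b u) within {0..\<Gamma>'})"
    using F_deriv img[OF u] by blast
  then have "(F has_real_derivative f (\<Gamma> * b u)) (at (\<Gamma> * b u) within ((\<lambda>v. \<Gamma> * b v) ` S))"
    by (rule has_field_derivative_subset) (use img in auto)
  from DERIV_image_chain[OF this g] show ?thesis by (simp add: o_def)
qed

lemma sol_exists: "hilt_ode_sol F f \<Gamma> d0 beta (\<lambda>u. phic (beta u))"
  unfolding hilt_ode_sol_def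
proof (intro conjI allI impI)
  show "beta 0 = 0" by (rule beta0)
  show "phic (beta 0) = d0" using beta0 phic_neg by simp
  fix u :: real assume u: "0 \<le> u"
  have bd: "(beta has_real_derivative phic (beta u)) (at u within {0..})"
    using beta_deriv[of u] a0 u by (auto intro: has_field_derivative_at_within)
  then show "(beta has_real_derivative phic (beta u)) (at u within {0..})" .
  let ?x = "beta u" let ?D = "phic (beta u)"
  have xr: "?x \<in> {0..1}" "\<Gamma> * ?x \<le> G2" using beta_range u by auto
  have fc: "((\<lambda>v. F (\<Gamma> * beta v)) has_real_derivative f (\<Gamma> * ?x) * (\<Gamma> * ?D)) (at u within {0..})"
    by (rule F_chain[OF bd]) (use beta_range u in auto)
  have "((\<lambda>v. 1 - beta v - (1 - d0) * (1 - F (\<Gamma> * beta v))) has_real_derivative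
      0 - ?D - (1 - d0) * (0 - f (\<Gamma> * ?x) * (\<Gamma> * ?D))) (at u within {0..})"
    by (intro DERIV_diff DERIV_const DERIV_cmult fc bd)
  then have dd: "((\<lambda>v. 1 - beta v - (1 - d0) * (1 - F (\<Gamma> * beta v))) has_derivative
      (*) (0 - ?D - (1 - d0) * (0 - f (\<Gamma> * ?x) * (\<Gamma> * ?D)))) (at u within {0..})"
    unfolding has_field_derivative_def .
  have eqs: "\<And>v. v \<in> {0..} \<Longrightarrow> phic (beta v) = 1 - beta v - (1 - d0) * (1 - F (\<Gamma> * beta v))"
    using beta_range(1) phic_in by auto
  have uin: "u \<in> {0..}" using u by simp
  have d1: "((\<lambda>v. phic (beta v)) has_real_derivative
      0 - ?D - (1 - d0) * (0 - f (\<Gamma> * ?x) * (\<Gamma> * ?D))) (at u within {0..})"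
    unfolding has_field_derivative_def by (rule has_derivative_transform[OF uin eqs dd])
  have k: "0 < 1 - F (\<Gamma> * ?x)" using one_minus_F_ge[OF xr(2)] \<kappa>_pos by linarith
  have eqn: "0 - ?D - (1 - d0) * (0 - f (\<Gamma> * ?x) * (\<Gamma> * ?D)) =
        hazard F f (\<Gamma> * ?x) * \<Gamma> * ?D * (1 - ?x - ?D) - ?D"
    unfolding hazard_def phic_in[OF xr(1)] using k by (simp add: field_simps)
  show "((\<lambda>v. phic (beta v)) has_real_derivative
      hazard F f (\<Gamma> * beta u) * \<Gamma> * phic (beta u) * (1 - beta u - phic (beta u)) - phic (beta u)) (at u within {0..})"
    unfolding eqn[symmetric] by (rule d1)
qed

lemma beta_deriv_within: "0 \<le> u \<Longrightarrow> (beta has_real_derivative phic (beta u)) (at u within S)"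
  using beta_deriv[of u] a0 by (auto intro: has_field_derivative_at_within)

lemma sol_on_interval:
  assumes sol: "hilt_ode_sol F f \<Gamma> d0 b d" and V: "0 \<le> V" and rng: "\<And>v. v \<in> {0..V} \<Longrightarrow> b v \<in> {0..1}"
  shows "\<And>v. v \<in> {0..V} \<Longrightarrow> b v = beta v \<and> d v = phic (beta v)"
proof -
  have b0: "b 0 = 0" and dd0: "d 0 = d0" using sol unfolding hilt_ode_sol_def by auto
  let ?H = "\<lambda>v. hazard F f (\<Gamma> * b v)"
  have bd: "(b has_real_derivative d v) (at v within {0..V})" if "v \<in> {0..V}" for v
    using sol that unfolding hilt_ode_sol_def by (auto intro: has_field_derivative_subset)
  have ddv: "(d has_real_derivative (?H v * \<Gamma> * d v * (1 - b v - d v) - d v)) (at v within {0..V})"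
    if "v \<in> {0..V}" for v
    using sol that unfolding hilt_ode_sol_def by (auto intro: has_field_derivative_subset)
  have dcont: "continuous_on {0..V} d"
    using ddv by (meson DERIV_continuous continuous_on_eq_continuous_within)
  have "compact (d ` {0..V})" by (intro compact_continuous_image dcont) auto
  then obtain Dm where Dm: "\<And>v. v \<in> {0..V} \<Longrightarrow> \<bar>d v\<bar> \<le> Dm"
    using compact_imp_bounded bounded_iff by (metis image_eqI real_norm_def)
  have Dm0: "0 \<le> Dm" using Dm[of 0] V by auto
  have img: "\<Gamma> * b v \<in> {0..\<Gamma>'}" "\<Gamma> * b v \<le> G2" if "v \<in> {0..V}" for v
  proof -
    have bi: "b v \<in> {0..1}" by (rule rng[OF that])
    have g: "\<Gamma> * b v \<le> \<Gamma>" using bi \<Gamma> by (simp add: mult_left_le)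
    have "0 \<le> \<Gamma> * b v" using bi \<Gamma> by simp
    then show "\<Gamma> * b v \<in> {0..\<Gamma>'}" "\<Gamma> * b v \<le> G2" using g \<Gamma>' G2 by auto
  qed
  have Hb: "\<bar>?H v\<bar> \<le> Bh" if "v \<in> {0..V}" for v
    using h_bound img[OF that] by auto
  have kpos: "0 < 1 - F (\<Gamma> * b v)" if "v \<in> {0..V}" for v
    using one_minus_F_ge[OF img(2)[OF that]] \<kappa>_pos by linarith
  define w where "w v = 1 - b v - d v - (1 - d0) * (1 - F (\<Gamma> * b v))" for v
  have wd: "(w has_real_derivative (- (?H v * \<Gamma> * d v) * w v)) (at v within {0..V})"
    if v: "v \<in> {0..V}" for v
  proof -
    have fc: "((\<lambda>v. F (\<Gamma> * b v)) has_real_derivative f (\<Gamma> * b v) * (\<Gamma> * d v)) (at v within {0..V})"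
      by (rule F_chain[OF bd[OF v]]) (use img v in auto)
    have "(w has_real_derivative 0 - d v - (?H v * \<Gamma> * d v * (1 - b v - d v) - d v)
            - (1 - d0) * (0 - f (\<Gamma> * b v) * (\<Gamma> * d v))) (at v within {0..V})"
      unfolding w_def[abs_def] by (intro DERIV_diff DERIV_const DERIV_cmult fc bd[OF v] ddv[OF v])
    moreover have "0 - d v - (?H v * \<Gamma> * d v * (1 - b v - d v) - d v)
            - (1 - d0) * (0 - f (\<Gamma> * b v) * (\<Gamma> * d v)) = - (?H v * \<Gamma> * d v) * w v"
      unfolding w_def hazard_def using kpos[OF v] by (simp add: field_simps)
    ultimately show ?thesis by simp
  qed
  have w0: "w v = 0" if v: "v \<in> {0..V}" for v
  proof -
    let ?g = "\<lambda>v. w v * w v"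
    have "?g v \<le> 0"
    proof (rule gronwall0[OF V _ _ _ v])
      fix x assume x: "x \<in> {0..V}"
      show "(?g has_real_derivative (- (?H x * \<Gamma> * d x) * w x) * w x + (- (?H x * \<Gamma> * d x) * w x) * w x)
              (at x within {0..V})"
        by (rule DERIV_mult[OF wd[OF x] wd[OF x]])
      have "(- (?H x * \<Gamma> * d x) * w x) * w x + (- (?H x * \<Gamma> * d x) * w x) * w x
            = - 2 * (?H x * \<Gamma> * d x) * (w x * w x)" by (simp add: algebra_simps)
      also have "\<dots> \<le> 2 * (Bh * \<Gamma> * Dm) * (w x * w x)"
      proof -
        have a1: "\<bar>?H x\<bar> * \<Gamma> \<le> Bh * \<Gamma>"
          using Hb[OF x] \<Gamma> by (simp add: mult_right_mono)
        have a2: "0 \<le> Bh * \<Gamma>" using Bh_nonneg \<Gamma> by simp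
        have "\<bar>?H x\<bar> * \<Gamma> * \<bar>d x\<bar> \<le> Bh * \<Gamma> * Dm"
          by (rule mult_mono[OF a1 Dm[OF x] a2 abs_ge_zero])
        then have "\<bar>?H x * \<Gamma> * d x\<bar> \<le> Bh * \<Gamma> * Dm"
          using \<Gamma> by (simp add: abs_mult)
        then have "- 2 * (?H x * \<Gamma> * d x) \<le> 2 * (Bh * \<Gamma> * Dm)" by linarith
        moreover have "0 \<le> w x * w x" by simp
        ultimately show ?thesis by (rule mult_right_mono)
      qed
      finally show "(- (?H x * \<Gamma> * d x) * w x) * w x + (- (?H x * \<Gamma> * d x) * w x) * w x
            \<le> 2 * (Bh * \<Gamma> * Dm) * (w x * w x)" .
    next
      show "w 0 * w 0 = 0" unfolding w_def b0 dd0 using F0 by simp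
    qed
    then have "w v * w v = 0" using zero_le_square[of "w v"] by linarith
    then show ?thesis by simp
  qed
  have dphi: "d v = phic (b v)" if v: "v \<in> {0..V}" for v
    using w0[OF v] phic_in[OF rng[OF v]] unfolding w_def by simp
  have zb: "b v = beta v" if v: "v \<in> {0..V}" for v
  proof -
    let ?g = "\<lambda>v. (b v - beta v) * (b v - beta v)"
    have "?g v \<le> 0"
    proof (rule gronwall0[OF V _ _ _ v])
      fix x assume x: "x \<in> {0..V}"
      have bed: "(beta has_real_derivative phic (beta x)) (at x within {0..V})"
        using x by (intro beta_deriv_within) auto
      show "(?g has_real_derivative (d x - phic (beta x)) * (b x - beta x) + (d x - phic (beta x)) * (b x - beta x))
              (at x within {0..V})"
        by (rule DERIV_mult[OF DERIV_diff[OF bd[OF x] bed] DERIV_diff[OF bd[OF x] bed]])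
      have "(d x - phic (beta x)) * (b x - beta x) + (d x - phic (beta x)) * (b x - beta x)
            = 2 * ((phic (b x) - phic (beta x)) * (b x - beta x))" using dphi[OF x] by simp
      also have "\<dots> \<le> 2 * (Lphi * (b x - beta x) * (b x - beta x))"
      proof -
        have "(phic (b x) - phic (beta x)) * (b x - beta x) \<le> \<bar>phic (b x) - phic (beta x)\<bar> * \<bar>b x - beta x\<bar>"
          using abs_ge_self[of "(phic (b x) - phic (beta x)) * (b x - beta x)"] by (simp add: abs_mult)
        also have "\<dots> \<le> Lphi * \<bar>b x - beta x\<bar> * \<bar>b x - beta x\<bar>"
          by (intro mult_right_mono phic_lip) auto
        also have "\<dots> = Lphi * (b x - beta x) * (b x - beta x)"
          by (simp add: abs_mult_self_eq mult.assoc)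
        finally show ?thesis by simp
      qed
      finally show "(d x - phic (beta x)) * (b x - beta x) + (d x - phic (beta x)) * (b x - beta x)
            \<le> 2 * Lphi * ((b x - beta x) * (b x - beta x))" by (simp add: algebra_simps)
    next
      show "?g 0 = 0" using b0 beta0 by simp
    qed
    then have "(b v - beta v) * (b v - beta v) = 0" using zero_le_square[of "b v - beta v"] by linarith
    then show ?thesis by simp
  qed
  fix v assume "v \<in> {0..V}"
  then show "b v = beta v \<and> d v = phic (beta v)" using zb dphi by simp
qed

lemma cont_pt:
  fixes g :: "real \<Rightarrow> real" and U e :: real
  assumes "continuous (at U within {0..}) g" "0 < e"
  obtains \<delta> where "0 < \<delta>" "\<And>v. 0 \<le> v \<Longrightarrow> \<bar>v - U\<bar> < \<delta> \<Longrightarrow> \<bar>g v - g U\<bar> < e"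
proof -
  from assms(1)[unfolded continuous_within_eps_delta] assms(2)
  obtain \<delta> where "0 < \<delta>" "\<forall>v\<in>{0..}. dist v U < \<delta> \<longrightarrow> dist (g v) (g U) < e" by blast
  then show ?thesis using that unfolding dist_real_def by auto
qed

lemma sol_range:
  assumes sol: "hilt_ode_sol F f \<Gamma> d0 b d" and v0: "0 \<le> v0"
  shows "b v0 \<in> {0..1}"
proof (rule ccontr)
  assume nv0: "b v0 \<notin> {0..1}"
  have b0: "b 0 = 0" using sol unfolding hilt_ode_sol_def by auto
  have bder: "(b has_real_derivative d v) (at v within {0..})" if "0 \<le> v" for v
    using sol that unfolding hilt_ode_sol_def by auto
  have dder: "\<exists>D. (d has_real_derivative D) (at v within {0..})" if "0 \<le> v" for v
    using sol that unfolding hilt_ode_sol_def by blast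
  have bc: "continuous (at v within {0..}) b" if "0 \<le> v" for v
    using bder[OF that] by (rule DERIV_continuous)
  have dc: "continuous (at v within {0..}) d" if "0 \<le> v" for v
    using dder[OF that] DERIV_continuous by blast
  define S where "S = {v. 0 \<le> v \<and> b v \<notin> {0..1}}"
  define U where "U = Inf S"
  have Sne: "S \<noteq> {}" using nv0 v0 unfolding S_def by auto
  have Sbd: "bdd_below S" unfolding S_def by (auto intro: bdd_belowI[of _ 0])
  have U0: "0 \<le> U" unfolding U_def by (rule cInf_greatest[OF Sne]) (auto simp: S_def)
  have below: "b v \<in> {0..1}" if "0 \<le> v" "v < U" for v
  proof (rule ccontr)
    assume "b v \<notin> {0..1}"
    then have "v \<in> S" using that unfolding S_def by auto
    then have "U \<le> v" unfolding U_def by (rule cInf_lower[OF _ Sbd])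
    then show False using that by simp
  qed
  have bU: "b U \<in> {0..1}"
  proof (cases "U = 0")
    case True then show ?thesis using b0 by simp
  next
    case False
    then have Upos: "0 < U" using U0 by simp
    show ?thesis
    proof (rule ccontr)
      assume nb: "b U \<notin> {0..1}"
      define e where "e = (if 1 < b U then b U - 1 else - b U)"
      have e: "0 < e" using nb unfolding e_def by auto
      obtain \<delta> where \<delta>: "0 < \<delta>" "\<And>v. 0 \<le> v \<Longrightarrow> \<bar>v - U\<bar> < \<delta> \<Longrightarrow> \<bar>b v - b U\<bar> < e"
        using cont_pt[OF bc[OF U0] e] by blast
      define v where "v = max 0 (U - \<delta>/2)"
      have v: "0 \<le> v" "v < U" "\<bar>v - U\<bar> < \<delta>" using \<delta>(1) Upos unfolding v_def by auto
      have "b v \<in> {0..1}" by (rule below[OF v(1,2)])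
      moreover have "\<bar>b v - b U\<bar> < e" by (rule \<delta>(2)[OF v(1,3)])
      ultimately show False using nb unfolding e_def by (auto split: if_splits)
    qed
  qed
  have rngU: "b v \<in> {0..1}" if "v \<in> {0..U}" for v
    using below bU that by (cases "v = U") auto
  have eqU: "b U = beta U" "d U = phic (beta U)"
    using sol_on_interval[OF sol U0 rngU, of U] U0 by auto
  have bU1: "b U < 1" using eqU beta_nonneg[OF U0] bs_props(2) by simp
  have dU: "0 < d U" using eqU beta_nonneg[OF U0] bs_props(4) by simp
  obtain \<delta>1 where \<delta>1: "0 < \<delta>1" "\<And>v. 0 \<le> v \<Longrightarrow> \<bar>v - U\<bar> < \<delta>1 \<Longrightarrow> \<bar>b v - b U\<bar> < 1 - b U"
    using cont_pt[OF bc[OF U0], of "1 - b U"] bU1 by auto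
  obtain \<delta>2 where \<delta>2: "0 < \<delta>2" "\<And>v. 0 \<le> v \<Longrightarrow> \<bar>v - U\<bar> < \<delta>2 \<Longrightarrow> \<bar>d v - d U\<bar> < d U"
    using cont_pt[OF dc[OF U0], of "d U"] dU by auto
  define \<delta> where "\<delta> = min \<delta>1 \<delta>2"
  have "Inf S < U + \<delta>" using \<delta>1 \<delta>2 unfolding U_def \<delta>_def by simp
  then obtain s where s: "s \<in> S" "s < U + \<delta>" using cInf_less_iff[OF Sne Sbd] by blast
  have Us: "U \<le> s" unfolding U_def by (rule cInf_lower[OF s(1) Sbd])
  have s0: "0 \<le> s" using Us U0 by simp
  have sd: "\<bar>s - U\<bar> < \<delta>1" using s Us unfolding \<delta>_def by auto
  have bs1: "b s < 1" using \<delta>1(2)[OF s0 sd] by simp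
  have "- b s \<le> - b U"
  proof (rule within_nonpos_mono[OF Us])
    fix x assume x: "x \<in> {U..s}"
    then have x0: "0 \<le> x" using U0 by simp
    show "((\<lambda>v. - b v) has_real_derivative - d x) (at x within {U..s})"
      using has_field_derivative_subset[OF bder[OF x0], of "{U..s}"] U0
      by (auto intro!: derivative_intros)
    have "\<bar>x - U\<bar> < \<delta>2" using x s unfolding \<delta>_def by auto
    then have "\<bar>d x - d U\<bar> < d U" by (rule \<delta>2(2)[OF x0])
    then show "- d x \<le> 0" by simp
  qed
  then have "0 \<le> b s" using bU by simp
  then have "b s \<in> {0..1}" using bs1 by simp
  then show False using s(1) unfolding S_def by simp
qed

lemma sol_unique:
  assumes sol: "hilt_ode_sol F f \<Gamma> d0 b d" and u: "0 \<le> u"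
  shows "b u = beta u \<and> d u = phic (beta u)"
  using sol_on_interval[OF sol u, of u] sol_range[OF sol] u by auto

end

abbreviation E :: "'a pmf \<Rightarrow> ('a \<Rightarrow> real) \<Rightarrow> real" where
  "E p g \<equiv> measure_pmf.expectation p g"

lemma fin_int: "finite (set_pmf p) \<Longrightarrow> integrable (measure_pmf p) (g :: 'a \<Rightarrow> real)"
  by (rule integrable_measure_pmf_finite)

lemma E_sum: "finite (set_pmf p) \<Longrightarrow> E p g = (\<Sum>a\<in>set_pmf p. pmf p a * g a)"
  by (subst integral_measure_pmf[of "set_pmf p"]) auto

lemma E_bind:
  assumes "finite (set_pmf p)" "\<And>x. x \<in> set_pmf p \<Longrightarrow> finite (set_pmf (f x))"
  shows "E (p \<bind> f) h = E p (\<lambda>x. E (f x) h)"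
  using assms by (subst pmf_expectation_bind[of "set_pmf p"]) (auto simp: E_sum)

lemma E_cong: "(\<And>x. x \<in> set_pmf p \<Longrightarrow> g x = g' x) \<Longrightarrow> E p g = E p g'"
  by (rule integral_cong_AE) (auto simp: AE_measure_pmf_iff)

lemma E_mono: "finite (set_pmf p) \<Longrightarrow> (\<And>x. x \<in> set_pmf p \<Longrightarrow> g x \<le> g' x) \<Longrightarrow> E p g \<le> E p g'"
  by (rule integral_mono_AE) (auto simp: AE_measure_pmf_iff fin_int)

lemma E_add: "finite (set_pmf p) \<Longrightarrow> E p (\<lambda>x. g x + g' x) = E p g + E p g'"
  by (rule Bochner_Integration.integral_add) (auto simp: fin_int)

lemma E_diff: "finite (set_pmf p) \<Longrightarrow> E p (\<lambda>x. g x - g' x) = E p g - E p g'"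
  by (rule Bochner_Integration.integral_diff) (auto simp: fin_int)

lemma E_cmult: "E p (\<lambda>x. c * g x) = c * E p g"
  by simp

lemma E_const: "E p (\<lambda>x. c) = c"
  by (simp add: measure_pmf.prob_space)

lemma E_nonneg: "(\<And>x. x \<in> set_pmf p \<Longrightarrow> 0 \<le> g x) \<Longrightarrow> 0 \<le> E p g"
  by (rule integral_nonneg_AE) (auto simp: AE_measure_pmf_iff)

lemma E_abs: "finite (set_pmf p) \<Longrightarrow> \<bar>E p g\<bar> \<le> E p (\<lambda>x. \<bar>g x\<bar>)"
  using integral_abs_bound[of "measure_pmf p" g] by simp

lemma E_sq_shift:
  assumes fin: "finite (set_pmf p)"
  shows "E p (\<lambda>x. (Z x - t)^2) \<le> E p (\<lambda>x. (Z x - a)^2) + (E p Z - t)^2"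
proof -
  have eq: "(Z x - t)^2 = (Z x - a)^2 + 2 * (a - t) * Z x + (t^2 - a^2)" for x
    by (simp add: power2_eq_square algebra_simps)
  have "E p (\<lambda>x. (Z x - t)^2) = E p (\<lambda>x. (Z x - a)^2 + 2 * (a - t) * Z x + (t^2 - a^2))"
    by (simp only: eq)
  also have "\<dots> = E p (\<lambda>x. (Z x - a)^2) + 2 * (a - t) * E p Z + (t^2 - a^2)"
    using fin by (simp add: E_add E_const)
  also have "\<dots> = E p (\<lambda>x. (Z x - a)^2) + (E p Z - t)^2 - (E p Z - a)^2"
    by (simp add: power2_eq_square algebra_simps)
  also have "\<dots> \<le> E p (\<lambda>x. (Z x - a)^2) + (E p Z - t)^2" by simp
  finally show ?thesis .
qed

lemma binom_moments:
  assumes p: "p \<in> {0..1}"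
  shows "E (binomial_pmf n p) real = n * p \<and>
         E (binomial_pmf n p) (\<lambda>k. real k ^ 2) = n * p * (1 - p) + (n * p)^2"
proof (induction n)
  case 0
  then show ?case using p by (simp add: binomial_pmf_0)
next
  case (Suc n)
  let ?B = "binomial_pmf n p"
  have finB: "finite (set_pmf ?B)" using p by auto
  have eq: "binomial_pmf (Suc n) p = bernoulli_pmf p \<bind> (\<lambda>b. ?B \<bind> (\<lambda>k. return_pmf ((if b then 1 else 0) + k)))"
    by (rule binomial_pmf_Suc[OF p])
  have inner: "E (?B \<bind> (\<lambda>k. return_pmf ((if b then 1 else 0) + k))) g = E ?B (\<lambda>k. g ((if b then 1 else 0) + k))"
    for b and g :: "nat \<Rightarrow> real"
    using finB by (subst E_bind) auto
  have finBer: "finite (set_pmf (bernoulli_pmf p))" by (rule finite_subset[of _ UNIV]) auto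
  have outer: "E (binomial_pmf (Suc n) p) g = p * E ?B (\<lambda>k. g (1 + k)) + (1 - p) * E ?B g"
    for g :: "nat \<Rightarrow> real"
  proof -
    have "E (binomial_pmf (Suc n) p) g = E (bernoulli_pmf p) (\<lambda>b. E ?B (\<lambda>k. g ((if b then 1 else 0) + k)))"
      unfolding eq using finBer finB
      by (subst E_bind) (auto simp: inner)
    also have "\<dots> = p * E ?B (\<lambda>k. g (1 + k)) + (1 - p) * E ?B g"
      using p by (subst integral_bernoulli_pmf) auto
    finally show ?thesis .
  qed
  have m1: "E ?B real = n * p" and m2: "E ?B (\<lambda>k. real k ^ 2) = n * p * (1 - p) + (n * p)^2"
    using Suc by auto
  have "E (binomial_pmf (Suc n) p) real = p * E ?B (\<lambda>k. 1 + real k) + (1 - p) * E ?B real"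
    using outer[of real] by simp
  also have "E ?B (\<lambda>k. 1 + real k) = 1 + E ?B real" using finB by (simp add: E_add E_const)
  finally have r1: "E (binomial_pmf (Suc n) p) real = real (Suc n) * p"
    using m1 by (simp add: algebra_simps)
  have "E (binomial_pmf (Suc n) p) (\<lambda>k. real k ^ 2) =
        p * E ?B (\<lambda>k. (1 + real k)^2) + (1 - p) * E ?B (\<lambda>k. real k ^ 2)"
    using outer[of "\<lambda>k. real k ^ 2"] by simp
  also have "E ?B (\<lambda>k. (1 + real k)^2) = 1 + 2 * E ?B real + E ?B (\<lambda>k. real k ^ 2)"
  proof -
    have "E ?B (\<lambda>k. (1 + real k)^2) = E ?B (\<lambda>k. 1 + 2 * real k + real k ^ 2)"
      by (simp add: power2_eq_square algebra_simps)
    also have "\<dots> = 1 + 2 * E ?B real + E ?B (\<lambda>k. real k ^ 2)"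
      using finB by (simp add: E_add E_const)
    finally show ?thesis .
  qed
  finally have r2: "E (binomial_pmf (Suc n) p) (\<lambda>k. real k ^ 2) =
      p * (1 + 2 * (n * p) + (n * p * (1 - p) + (n * p)^2)) + (1 - p) * (n * p * (1 - p) + (n * p)^2)"
    using m1 m2 by simp
  show ?case using r1 r2 by (simp add: power2_eq_square algebra_simps)
qed

lemma binom_mean: "p \<in> {0..1} \<Longrightarrow> E (binomial_pmf n p) real = n * p"
  using binom_moments by blast

lemma binom_sq_le: "p \<in> {0..1} \<Longrightarrow> E (binomial_pmf n p) (\<lambda>k. real k ^ 2) \<le> n * p + (n * p)^2"
proof -
  assume p: "p \<in> {0..1}"
  have "0 \<le> n * p * p" using p by simp
  then show ?thesis using binom_moments[OF p, of n] by (simp add: algebra_simps)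
qed

lemma binom_set: "p \<in> {0..1} \<Longrightarrow> k \<in> set_pmf (binomial_pmf n p) \<Longrightarrow> k \<le> n"
  by (auto simp: set_pmf_binomial_eq split: if_splits)


context hiltF begin

definition gam :: "nat \<Rightarrow> real" where "gam N = gammaN \<Gamma> N"
definition pc :: "nat \<Rightarrow> nat \<Rightarrow> nat \<Rightarrow> real" where
  "pc N j c = (F (gam N * real (j + c)) - F (gam N * real j)) / (1 - F (gam N * real j))"

lemma step_eq: "hilt_step F \<Gamma> N (j, m) =
  binomial_pmf m (1 / real N) \<bind> (\<lambda>c. binomial_pmf (N - j - m) (pc N j c) \<bind> (\<lambda>e. return_pmf (j + c, m - c + e)))"
  unfolding hilt_step_def pc_def gam_def by simp

lemma gam_pos: "2 \<le> N \<Longrightarrow> 0 < gam N"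
  unfolding gam_def gammaN_def using \<Gamma> by simp

lemma gam_le: assumes "2 \<le> N" shows "gam N \<le> 2 * \<Gamma> / N"
proof -
  have "real N \<le> 2 * (real N - 1)" using assms by simp
  then have "\<Gamma> * real N \<le> 2 * \<Gamma> * (real N - 1)" using \<Gamma> by (simp add: mult_left_mono)
  moreover have "0 < real N - 1" "0 < real N" using assms by auto
  ultimately show ?thesis unfolding gam_def gammaN_def by (simp add: field_simps)
qed

lemma q_range: "1 / real N \<in> {0..1}"
  by (cases N) auto

lemma pc_range: assumes "2 \<le> N" shows "pc N j c \<in> {0..1}"
proof -
  have g: "0 \<le> gam N" using gam_pos[OF assms] by simp
  have num0: "0 \<le> F (gam N * real (j + c)) - F (gam N * real j)"
    using F_mono[of "gam N * real j" "gam N * real (j + c)"] g by (simp add: mult_left_mono)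
  have num1: "F (gam N * real (j + c)) - F (gam N * real j) \<le> 1 - F (gam N * real j)"
    using F_le1 by simp
  show ?thesis
  proof (cases "1 - F (gam N * real j) = 0")
    case True then show ?thesis unfolding pc_def by simp
  next
    case False
    then have "0 < 1 - F (gam N * real j)" using F_le1[of "gam N * real j"] by linarith
    then show ?thesis unfolding pc_def using num0 num1 by (simp add: divide_le_eq_1)
  qed
qed

lemma fin_binom: "p \<in> {0..1} \<Longrightarrow> finite (set_pmf (binomial_pmf n p))"
  by auto

lemma step_fin: assumes "2 \<le> N" shows "finite (set_pmf (hilt_step F \<Gamma> N s))"
proof -
  obtain j m where s: "s = (j, m)" by (cases s)
  show ?thesis unfolding s step_eq using q_range pc_range[OF assms]
    by (auto simp: set_bind_pmf intro!: finite_UN_I)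
qed

lemma step_supp:
  assumes N: "2 \<le> N" and v: "j + m \<le> N" and s': "s' \<in> set_pmf (hilt_step F \<Gamma> N (j, m))"
  shows "j \<le> fst s' \<and> fst s' \<le> j + m \<and> j + m \<le> fst s' + snd s' \<and> fst s' + snd s' \<le> N"
proof -
  from s' obtain c e where c: "c \<in> set_pmf (binomial_pmf m (1 / real N))"
    and e: "e \<in> set_pmf (binomial_pmf (N - j - m) (pc N j c))" and s'eq: "s' = (j + c, m - c + e)"
    unfolding step_eq by (auto simp: set_bind_pmf)
  have cm: "c \<le> m" by (rule binom_set[OF q_range c])
  have en: "e \<le> N - j - m" by (rule binom_set[OF pc_range[OF N] e])
  show ?thesis using cm en v unfolding s'eq by auto
qed

lemma E_step:
  assumes N: "2 \<le> N"
  shows "E (hilt_step F \<Gamma> N (j, m)) g =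
    E (binomial_pmf m (1 / real N)) (\<lambda>c. E (binomial_pmf (N - j - m) (pc N j c)) (\<lambda>e. g (j + c, m - c + e)))"
proof -
  have "E (hilt_step F \<Gamma> N (j, m)) g =
    E (binomial_pmf m (1 / real N)) (\<lambda>c. E (binomial_pmf (N - j - m) (pc N j c) \<bind> (\<lambda>e. return_pmf (j + c, m - c + e))) g)"
    unfolding step_eq using q_range pc_range[OF N]
    by (subst E_bind) (auto simp: set_bind_pmf intro!: finite_UN_I)
  also have "\<dots> = E (binomial_pmf m (1 / real N)) (\<lambda>c. E (binomial_pmf (N - j - m) (pc N j c)) (\<lambda>e. g (j + c, m - c + e)))"
    using pc_range[OF N] by (intro E_cong) (subst E_bind, auto)
  finally show ?thesis .
qed

primrec chainp :: "nat \<Rightarrow> nat \<times> nat \<Rightarrow> nat \<Rightarrow> (nat \<times> nat) pmf" where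
  "chainp N s0 0 = return_pmf s0"
| "chainp N s0 (Suc k) = chainp N s0 k \<bind> hilt_step F \<Gamma> N"

lemma chain_supp:
  assumes N: "2 \<le> N" and s0: "fst s0 + snd s0 \<le> N"
  shows "finite (set_pmf (chainp N s0 k)) \<and> (\<forall>s\<in>set_pmf (chainp N s0 k). fst s + snd s \<le> N)"
proof (induction k)
  case 0 then show ?case using s0 by simp
next
  case (Suc k)
  have fin: "finite (set_pmf (chainp N s0 (Suc k)))"
    using Suc step_fin[OF N] by (auto simp: set_bind_pmf intro!: finite_UN_I)
  have "fst s' + snd s' \<le> N" if "s' \<in> set_pmf (chainp N s0 (Suc k))" for s'
  proof -
    from that obtain s where s: "s \<in> set_pmf (chainp N s0 k)" "s' \<in> set_pmf (hilt_step F \<Gamma> N s)"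
      by (auto simp: set_bind_pmf)
    obtain j m where jm: "s = (j, m)" by (cases s)
    have "j + m \<le> N" using Suc s jm by auto
    then show ?thesis using step_supp[OF N _ s(2)[unfolded jm]] by auto
  qed
  then show ?case using fin by blast
qed

lemma E_chain_Suc:
  assumes N: "2 \<le> N" and s0: "fst s0 + snd s0 \<le> N"
  shows "E (chainp N s0 (Suc k)) g = E (chainp N s0 k) (\<lambda>s. E (hilt_step F \<Gamma> N s) g)"
  using chain_supp[OF N s0, of k] step_fin[OF N] by (simp add: E_bind)

lemma last_len: "length xs = Suc n \<Longrightarrow> last xs = xs ! n"
  by (cases xs rule: rev_cases) (auto simp: nth_append)

lemma path_len: "xs \<in> set_pmf (hilt_path F \<Gamma> N s0 n) \<Longrightarrow> length xs = Suc n"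
  by (induction n arbitrary: xs) (auto simp: set_bind_pmf)

lemma path_nth: "k \<le> n \<Longrightarrow> map_pmf (\<lambda>xs. xs ! k) (hilt_path F \<Gamma> N s0 n) = chainp N s0 k"
proof (induction n arbitrary: k)
  case 0 then show ?case by simp
next
  case (Suc n)
  have lastn: "map_pmf last (hilt_path F \<Gamma> N s0 n) = chainp N s0 n"
  proof -
    have "map_pmf last (hilt_path F \<Gamma> N s0 n) = map_pmf (\<lambda>xs. xs ! n) (hilt_path F \<Gamma> N s0 n)"
      by (rule map_pmf_cong) (auto dest!: path_len simp: last_len)
    then show ?thesis using Suc.IH[of n] by simp
  qed
  show ?case
  proof (cases "k \<le> n")
    case True
    have "map_pmf (\<lambda>xs. xs ! k) (hilt_path F \<Gamma> N s0 (Suc n)) =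
          hilt_path F \<Gamma> N s0 n \<bind> (\<lambda>xs. map_pmf (\<lambda>s. (xs @ [s]) ! k) (hilt_step F \<Gamma> N (last xs)))"
      by (simp add: map_bind_pmf map_pmf_comp)
    also have "\<dots> = hilt_path F \<Gamma> N s0 n \<bind> (\<lambda>xs. return_pmf (xs ! k))"
    proof (rule bind_pmf_cong[OF refl])
      fix xs assume "xs \<in> set_pmf (hilt_path F \<Gamma> N s0 n)"
      then have "length xs = Suc n" by (rule path_len)
      then have "\<And>s. (xs @ [s]) ! k = xs ! k" using True by (simp add: nth_append)
      then show "map_pmf (\<lambda>s. (xs @ [s]) ! k) (hilt_step F \<Gamma> N (last xs)) = return_pmf (xs ! k)"
        by (simp add: map_pmf_const)
    qed
    also have "\<dots> = map_pmf (\<lambda>xs. xs ! k) (hilt_path F \<Gamma> N s0 n)" by (simp add: map_pmf_def)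
    finally show ?thesis using Suc.IH[OF True] by simp
  next
    case False
    then have k: "k = Suc n" using Suc.prems by simp
    have "map_pmf (\<lambda>xs. xs ! k) (hilt_path F \<Gamma> N s0 (Suc n)) =
          hilt_path F \<Gamma> N s0 n \<bind> (\<lambda>xs. map_pmf (\<lambda>s. (xs @ [s]) ! k) (hilt_step F \<Gamma> N (last xs)))"
      by (simp add: map_bind_pmf map_pmf_comp)
    also have "\<dots> = hilt_path F \<Gamma> N s0 n \<bind> (\<lambda>xs. hilt_step F \<Gamma> N (last xs))"
    proof (rule bind_pmf_cong[OF refl])
      fix xs assume "xs \<in> set_pmf (hilt_path F \<Gamma> N s0 n)"
      then have "length xs = Suc n" by (rule path_len)
      then have "\<And>s. (xs @ [s]) ! k = s" using k by (simp add: nth_append)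
      then show "map_pmf (\<lambda>s. (xs @ [s]) ! k) (hilt_step F \<Gamma> N (last xs)) = hilt_step F \<Gamma> N (last xs)"
        by simp
    qed
    also have "\<dots> = map_pmf last (hilt_path F \<Gamma> N s0 n) \<bind> hilt_step F \<Gamma> N"
      by (simp add: bind_map_pmf)
    finally show ?thesis using lastn k by simp
  qed
qed

lemma path_step:
  "xs \<in> set_pmf (hilt_path F \<Gamma> N s0 n) \<Longrightarrow> i < n \<Longrightarrow> xs ! Suc i \<in> set_pmf (hilt_step F \<Gamma> N (xs ! i))"
proof (induction n arbitrary: xs)
  case 0 then show ?case by simp
next
  case (Suc n)
  from Suc.prems(1) obtain ys s where ys: "ys \<in> set_pmf (hilt_path F \<Gamma> N s0 n)"
    and s: "s \<in> set_pmf (hilt_step F \<Gamma> N (last ys))" and xs: "xs = ys @ [s]"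
    by (auto simp: set_bind_pmf)
  have ly: "length ys = Suc n" by (rule path_len[OF ys])
  show ?case
  proof (cases "i < n")
    case True
    then show ?thesis using Suc.IH[OF ys True] ly unfolding xs by (simp add: nth_append)
  next
    case False
    then have "i = n" using Suc.prems by simp
    then show ?thesis using s ly last_len[OF ly] unfolding xs by (simp add: nth_append)
  qed
qed

lemma path_0: "xs \<in> set_pmf (hilt_path F \<Gamma> N s0 n) \<Longrightarrow> xs ! 0 = s0"
proof (induction n arbitrary: xs)
  case 0 then show ?case by simp
next
  case (Suc n)
  from Suc.prems obtain ys s where ys: "ys \<in> set_pmf (hilt_path F \<Gamma> N s0 n)"
    and xs: "xs = ys @ [s]" by (auto simp: set_bind_pmf)
  have "length ys = Suc n" by (rule path_len[OF ys])
  then show ?case using Suc.IH[OF ys] unfolding xs by (simp add: nth_append)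
qed

lemma path_valid:
  assumes N: "2 \<le> N" and s0: "fst s0 + snd s0 \<le> N" and xs: "xs \<in> set_pmf (hilt_path F \<Gamma> N s0 n)"
  shows "i \<le> n \<Longrightarrow> fst (xs ! i) + snd (xs ! i) \<le> N"
proof (induction i)
  case 0 then show ?case using path_0[OF xs] s0 by simp
next
  case (Suc i)
  then have "xs ! Suc i \<in> set_pmf (hilt_step F \<Gamma> N (xs ! i))" using path_step[OF xs] by simp
  then show ?case using step_supp[OF N, of "fst (xs ! i)" "snd (xs ! i)"] Suc by auto
qed

lemma path_mono:
  assumes N: "2 \<le> N" and s0: "fst s0 + snd s0 \<le> N" and xs: "xs \<in> set_pmf (hilt_path F \<Gamma> N s0 n)"
    and ii: "i \<le> i'" "i' \<le> n"
  shows "fst (xs ! i) \<le> fst (xs ! i') \<and> fst (xs ! i) + snd (xs ! i) \<le> fst (xs ! i') + snd (xs ! i')"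
  using ii
proof (induction i' rule: dec_induct)
  case base then show ?case by simp
next
  case (step k)
  have v: "fst (xs ! k) + snd (xs ! k) \<le> N" using path_valid[OF N s0 xs] step by simp
  have "xs ! Suc k \<in> set_pmf (hilt_step F \<Gamma> N (xs ! k))" using path_step[OF xs] step by simp
  then have "fst (xs ! k) \<le> fst (xs ! Suc k) \<and> fst (xs ! k) + snd (xs ! k) \<le> fst (xs ! Suc k) + snd (xs ! Suc k)"
    using step_supp[OF N v, of "xs ! Suc k"] by simp
  then show ?case using step by auto
qed

end

context hiltF begin

definition N0 :: nat where "N0 = nat \<lceil>G2 / (G2 - \<Gamma>)\<rceil> + 2"

lemma N0: assumes "N0 \<le> N" shows "2 \<le> N" "gam N * real N \<le> G2"
proof -
  show N2: "2 \<le> N" using assms unfolding N0_def by simp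
  have d: "0 < G2 - \<Gamma>" using G2 by simp
  have "G2 / (G2 - \<Gamma>) \<le> real (nat \<lceil>G2 / (G2 - \<Gamma>)\<rceil>)" by (rule real_nat_ceiling_ge)
  also have "\<dots> \<le> real N"
  proof -
    have "nat \<lceil>G2 / (G2 - \<Gamma>)\<rceil> \<le> N" using assms unfolding N0_def by linarith
    then show ?thesis by (simp only: of_nat_le_iff)
  qed
  finally have "G2 \<le> real N * (G2 - \<Gamma>)" using d by (simp add: divide_le_eq)
  then have "\<Gamma> * real N \<le> G2 * (real N - 1)" by (simp add: algebra_simps)
  moreover have "0 < real N - 1" using N2 by simp
  ultimately show "gam N * real N \<le> G2" unfolding gam_def gammaN_def by (simp add: divide_le_eq)
qed

lemma gam_j: assumes "N0 \<le> N" "j \<le> N" shows "0 \<le> gam N * real j" "gam N * real j \<le> G2"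
proof -
  have g: "0 < gam N" using gam_pos N0(1)[OF assms(1)] by simp
  then show "0 \<le> gam N * real j" by simp
  have "gam N * real j \<le> gam N * real N" using g assms(2) by simp
  then show "gam N * real j \<le> G2" using N0(2)[OF assms(1)] by simp
qed

lemma gam_diff: assumes "2 \<le> N" shows "gam N - \<Gamma> / real N = gam N / real N"
  using assms unfolding gam_def gammaN_def by (simp add: field_simps)

definition \<Delta> :: real where "\<Delta> = \<Gamma>' - G2"
lemma \<Delta>_pos: "0 < \<Delta>" unfolding \<Delta>_def using G2 by simp

definition K4 :: real where "K4 = max Bf (1 / \<Delta>)"
definition Mt :: real where "Mt = Kf' + 1 / \<Delta>^2 + Bf / \<Delta>"

lemma K4_nonneg: "0 \<le> K4" unfolding K4_def using Bf_nonneg by simp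
lemma Mt_nonneg: "0 \<le> Mt" unfolding Mt_def using Bf_nonneg Kf'_nonneg \<Delta>_pos by simp

lemma Fdiff_bounds:
  assumes x: "0 \<le> x" "x \<le> G2" and t: "0 \<le> t"
  shows "0 \<le> F (x + t) - F x" "F (x + t) - F x \<le> K4 * t"
    "\<bar>F (x + t) - F x - f x * t\<bar> \<le> Mt * t^2"
proof -
  show "0 \<le> F (x + t) - F x" using F_mono[of x "x + t"] t by simp
  have xi: "x \<in> {0..\<Gamma>'}" using x G2 by simp
  have fx: "\<bar>f x\<bar> \<le> Bf" using Bf[OF xi] .
  have "F (x + t) - F x \<le> K4 * t \<and> \<bar>F (x + t) - F x - f x * t\<bar> \<le> Mt * t^2"
  proof (cases "x + t \<le> \<Gamma>'")
    case True
    have "\<bar>F (x + t) - F x\<bar> \<le> Bf * \<bar>x + t - x\<bar>" by (rule F_lip) (use True x t xi in auto)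
    then have a: "F (x + t) - F x \<le> Bf * t" using t by simp
    have "Bf \<le> K4" unfolding K4_def by simp
    from mult_right_mono[OF this t] have "Bf * t \<le> K4 * t" .
    moreover have "\<bar>F (x + t) - F x - f x * (x + t - x)\<bar> \<le> Kf' * (x + t - x)^2"
      by (rule F_taylor) (use x t True in auto)
    moreover have "Kf' * t^2 \<le> Mt * t^2" unfolding Mt_def using \<Delta>_pos Bf_nonneg
      by (intro mult_right_mono) auto
    ultimately show ?thesis using a by simp
  next
    case False
    then have tD: "\<Delta> \<le> t" unfolding \<Delta>_def using x by simp
    have tD1: "1 \<le> t / \<Delta>" using tD \<Delta>_pos by simp
    have d1: "F (x + t) - F x \<le> 1" using F_le1[of "x + t"] F_nonneg[of x] by simp
    have "1 / \<Delta> \<le> K4" unfolding K4_def by simp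
    from mult_right_mono[OF this t] have "1 / \<Delta> * t \<le> K4 * t" .
    then have a: "F (x + t) - F x \<le> K4 * t" using d1 tD1 by simp
    have sq: "1 \<le> t^2 / \<Delta>^2" using tD1 by (simp add: power_divide[symmetric] one_le_power)
    have lin: "t \<le> t^2 / \<Delta>" using tD1 t \<Delta>_pos by (simp add: power2_eq_square field_simps)
    have "\<bar>F (x + t) - F x - f x * t\<bar> \<le> \<bar>F (x + t) - F x\<bar> + \<bar>f x\<bar> * t"
    proof -
      have "\<bar>F (x + t) - F x - f x * t\<bar> \<le> \<bar>F (x + t) - F x\<bar> + \<bar>f x * t\<bar>" by (rule abs_triangle_ineq4)
      also have "\<bar>f x * t\<bar> = \<bar>f x\<bar> * t" using t by (simp add: abs_mult)
      finally show ?thesis .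
    qed
    also have "\<dots> \<le> 1 + Bf * t" using d1 \<open>0 \<le> F (x + t) - F x\<close> fx t
      by (intro add_mono mult_right_mono) auto
    also have "\<dots> \<le> t^2 / \<Delta>^2 + Bf * (t^2 / \<Delta>)"
      using sq lin Bf_nonneg by (intro add_mono mult_left_mono) auto
    also have "\<dots> = (1 / \<Delta>^2 + Bf / \<Delta>) * t^2" by (simp add: field_simps)
    also have "\<dots> \<le> Mt * t^2" unfolding Mt_def using Kf'_nonneg by (intro mult_right_mono) auto
    finally show ?thesis using a by simp
  qed
  then show "F (x + t) - F x \<le> K4 * t" "\<bar>F (x + t) - F x - f x * t\<bar> \<le> Mt * t^2" by auto
qed

lemma aux_div: "(D::real) \<noteq> 0 \<Longrightarrow> n * (a / D) - n * (b / D) * t = n * (a - b * t) / D"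
  by (simp add: field_simps)

definition K3 :: real where "K3 = 2 * \<Gamma> * K4 / \<kappa>"
definition Cq :: real where "Cq = 4 * \<Gamma>^2 * Mt / \<kappa>"

lemma K3_nonneg: "0 \<le> K3" unfolding K3_def using \<Gamma> K4_nonneg \<kappa>_pos by simp
lemma Cq_nonneg: "0 \<le> Cq" unfolding Cq_def using \<Gamma> Mt_nonneg \<kappa>_pos by simp

lemma npc_bounds:
  assumes N: "N0 \<le> N" and v: "j + m \<le> N"
  shows "0 \<le> real (N - j - m) * pc N j c"
        "real (N - j - m) * pc N j c \<le> K3 * real c"
        "\<bar>real (N - j - m) * pc N j c - real (N - j - m) * h (gam N * real j) * (gam N * real c)\<bar>
           \<le> Cq * (real c)^2 / real N"
proof -
  have N2: "2 \<le> N" using N0(1)[OF N] .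
  let ?x = "gam N * real j" and ?t = "gam N * real c" and ?n = "real (N - j - m)"
  have x: "0 \<le> ?x" "?x \<le> G2" using gam_j[OF N] v by auto
  have g: "0 < gam N" using gam_pos[OF N2] .
  have t0: "0 \<le> ?t" using g by simp
  have tle: "?t \<le> 2 * \<Gamma> * real c / real N"
    using mult_right_mono[OF gam_le[OF N2], of "real c"] by simp
  have den: "\<kappa> \<le> 1 - F ?x" using one_minus_F_ge[OF x(2)] .
  have denp: "0 < 1 - F ?x" using den \<kappa>_pos by simp
  have nN: "?n \<le> real N" by simp
  have n0: "0 \<le> ?n" by simp
  have Np: "0 < real N" using N2 by simp
  have eqx: "gam N * real (j + c) = ?x + ?t" by (simp add: algebra_simps)
  have pc_eq: "pc N j c = (F (?x + ?t) - F ?x) / (1 - F ?x)" unfolding pc_def eqx ..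
  note fb = Fdiff_bounds[OF x t0]
  have pc0: "0 \<le> pc N j c" unfolding pc_eq using fb(1) denp by simp
  then show "0 \<le> ?n * pc N j c" by simp
  have "pc N j c \<le> K4 * ?t / \<kappa>"
    unfolding pc_eq using fb(1,2) den \<kappa>_pos K4_nonneg t0 by (intro frac_le) auto
  then have "?n * pc N j c \<le> real N * (K4 * ?t / \<kappa>)"
    using pc0 nN by (intro mult_mono) (auto intro!: divide_nonneg_pos mult_nonneg_nonneg K4_nonneg t0 \<kappa>_pos)
  also have "\<dots> \<le> real N * (K4 * (2 * \<Gamma> * real c / real N) / \<kappa>)"
    using tle K4_nonneg \<kappa>_pos Np by (intro mult_left_mono divide_right_mono) auto
  also have "\<dots> = K3 * real c" unfolding K3_def using Np by (simp add: field_simps)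
  finally show "?n * pc N j c \<le> K3 * real c" .
  have "?n * pc N j c - ?n * h ?x * ?t = ?n * (F (?x + ?t) - F ?x - f ?x * ?t) / (1 - F ?x)"
    unfolding pc_eq hazard_def using denp by (intro aux_div) simp
  then have "\<bar>?n * pc N j c - ?n * h ?x * ?t\<bar> = ?n * \<bar>F (?x + ?t) - F ?x - f ?x * ?t\<bar> / (1 - F ?x)"
    using denp by (simp add: abs_mult)
  also have "\<dots> \<le> real N * (Mt * ?t^2) / \<kappa>"
    using fb(3) nN n0 den \<kappa>_pos Mt_nonneg by (intro frac_le mult_mono) auto
  also have "\<dots> \<le> real N * (Mt * (2 * \<Gamma> * real c / real N)^2) / \<kappa>"
    using tle t0 Mt_nonneg \<kappa>_pos Np by (intro divide_right_mono mult_left_mono power_mono) auto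
  also have "\<dots> = Cq * (real c)^2 / real N" unfolding Cq_def using Np by (simp add: field_simps power2_eq_square)
  finally show "\<bar>?n * pc N j c - ?n * h ?x * ?t\<bar> \<le> Cq * (real c)^2 / real N" .
qed

lemma c_moments:
  assumes "m \<le> N"
  shows "E (binomial_pmf m (1 / real N)) real = real m / real N"
        "E (binomial_pmf m (1 / real N)) (\<lambda>c. (real c)^2) \<le> 2"
proof -
  show "E (binomial_pmf m (1 / real N)) real = real m / real N" using binom_mean[OF q_range] by simp
  have mq: "real m * (1 / real N) \<le> 1" using assms by (cases "N = 0") (auto simp: field_simps)
  have mq0: "0 \<le> real m * (1 / real N)" by simp
  have "E (binomial_pmf m (1 / real N)) (\<lambda>c. (real c)^2) \<le> real m * (1 / real N) + (real m * (1 / real N))^2"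
    by (rule binom_sq_le[OF q_range])
  also have "\<dots> \<le> 1 + 1" using mq mq0 by (intro add_mono) (auto simp: power_le_one)
  finally show "E (binomial_pmf m (1 / real N)) (\<lambda>c. (real c)^2) \<le> 2" by simp
qed

definition C\<eta> :: real where "C\<eta> = 2 * Cq + 4 * \<Gamma>^2 * Lh + 2 * \<Gamma> * Bh"

lemma drift:
  assumes N: "N0 \<le> N" and v: "j + m \<le> N"
  shows "\<bar>E (binomial_pmf m (1 / real N)) (\<lambda>c. real (N - j - m) * pc N j c)
          - h (\<Gamma> * (real j / real N)) * \<Gamma> * (real m / real N) * (real (N - j - m) / real N)\<bar> \<le> C\<eta> / real N"
proof -
  have N2: "2 \<le> N" using N0(1)[OF N] .
  have Np: "0 < real N" using N2 by simp
  let ?C = "binomial_pmf m (1 / real N)" and ?n = "real (N - j - m)"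
  let ?x = "gam N * real j" and ?y = "\<Gamma> * (real j / real N)" and ?g = "gam N"
  have finC: "finite (set_pmf ?C)" using q_range by auto
  have mN: "m \<le> N" using v by simp
  note cm = c_moments[OF mN]
  define A where "A = E ?C (\<lambda>c. ?n * h ?x * (?g * real c))"
  have A: "A = ?n * h ?x * ?g * (real m / real N)"
    unfolding A_def using cm(1) by (simp add: mult.assoc)
  have "\<bar>E ?C (\<lambda>c. ?n * pc N j c) - A\<bar> = \<bar>E ?C (\<lambda>c. ?n * pc N j c - ?n * h ?x * (?g * real c))\<bar>"
    unfolding A_def using finC by (simp add: E_diff)
  also have "\<dots> \<le> E ?C (\<lambda>c. \<bar>?n * pc N j c - ?n * h ?x * (?g * real c)\<bar>)" by (rule E_abs[OF finC])
  also have "\<dots> \<le> E ?C (\<lambda>c. Cq * (real c)^2 / real N)"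
    by (rule E_mono[OF finC]) (rule npc_bounds(3)[OF N v])
  also have "\<dots> = Cq / real N * E ?C (\<lambda>c. (real c)^2)" by simp
  also have "\<dots> \<le> Cq / real N * 2" using cm(2) Cq_nonneg Np by (intro mult_left_mono) auto
  finally have e1: "\<bar>E ?C (\<lambda>c. ?n * pc N j c) - A\<bar> \<le> 2 * Cq / real N" by (simp add: mult.commute)
  have x: "0 \<le> ?x" "?x \<le> G2" using gam_j[OF N] v by auto
  have jN: "real j \<le> real N" using v by simp
  have y: "0 \<le> ?y" "?y \<le> G2"
  proof -
    show "0 \<le> ?y" using \<Gamma> by simp
    have "real j / real N \<le> 1" using jN Np by simp
    from mult_left_mono[OF this, of \<Gamma>] have "?y \<le> \<Gamma>" using \<Gamma> by simp
    then show "?y \<le> G2" using G2 by simp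
  qed
  have gd: "?g - \<Gamma> / real N = ?g / real N" by (rule gam_diff[OF N2])
  have gle: "?g \<le> 2 * \<Gamma> / real N" by (rule gam_le[OF N2])
  have g0: "0 < ?g" by (rule gam_pos[OF N2])
  have xy: "?x - ?y = real j * (?g / real N)"
  proof -
    have "?x - ?y = real j * (?g - \<Gamma> / real N)" by (simp add: algebra_simps)
    then show ?thesis using gd by simp
  qed
  have xy_le: "\<bar>?x - ?y\<bar> \<le> 2 * \<Gamma> / real N"
  proof -
    have "\<bar>?x - ?y\<bar> = real j / real N * ?g" unfolding xy using g0 by (simp add: abs_mult)
    also have "\<dots> \<le> 1 * ?g" using jN Np g0 by (intro mult_right_mono) auto
    finally show ?thesis using gle by simp
  qed
  have hl: "\<bar>h ?x - h ?y\<bar> \<le> Lh * (2 * \<Gamma> / real N)"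
    using h_lip[OF x y] xy_le Lh_nonneg by (meson mult_left_mono order_trans)
  have hy: "\<bar>h ?y\<bar> \<le> Bh" by (rule h_bound[OF y])
  have inner: "\<bar>h ?x * ?g - h ?y * (\<Gamma> / real N)\<bar> \<le> (4 * \<Gamma>^2 * Lh + 2 * \<Gamma> * Bh) / (real N)^2"
  proof -
    have "h ?x * ?g - h ?y * (\<Gamma> / real N) = ?g * (h ?x - h ?y) + h ?y * (?g - \<Gamma> / real N)"
      by (simp add: algebra_simps)
    then have "h ?x * ?g - h ?y * (\<Gamma> / real N) = ?g * (h ?x - h ?y) + h ?y * (?g / real N)"
      using gd by simp
    then have "\<bar>h ?x * ?g - h ?y * (\<Gamma> / real N)\<bar> \<le> ?g * \<bar>h ?x - h ?y\<bar> + \<bar>h ?y\<bar> * (?g / real N)"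
    proof -
      have "\<bar>?g * (h ?x - h ?y) + h ?y * (?g / real N)\<bar> \<le> \<bar>?g * (h ?x - h ?y)\<bar> + \<bar>h ?y * (?g / real N)\<bar>"
        by (rule abs_triangle_ineq)
      also have "\<bar>?g * (h ?x - h ?y)\<bar> = ?g * \<bar>h ?x - h ?y\<bar>" using g0 by (simp add: abs_mult)
      also have "\<bar>h ?y * (?g / real N)\<bar> = \<bar>h ?y\<bar> * (?g / real N)" using g0 Np by (simp add: abs_mult)
      finally show ?thesis using \<open>h ?x * ?g - h ?y * (\<Gamma> / real N) = ?g * (h ?x - h ?y) + h ?y * (?g / real N)\<close> by simp
    qed
    also have "\<dots> \<le> (2 * \<Gamma> / real N) * (Lh * (2 * \<Gamma> / real N)) + Bh * ((2 * \<Gamma> / real N) / real N)"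
      using hl hy gle g0 Np Lh_nonneg Bh_nonneg \<Gamma>
      by (intro add_mono mult_mono divide_right_mono) auto
    also have "\<dots> = (4 * \<Gamma>^2 * Lh + 2 * \<Gamma> * Bh) / (real N)^2"
      using Np by (simp add: field_simps power2_eq_square)
    finally show ?thesis .
  qed
  have nm: "?n * (real m / real N) \<le> real N"
  proof -
    have "?n \<le> real N" "real m / real N \<le> 1" using mN Np by auto
    then have "?n * (real m / real N) \<le> real N * 1" by (intro mult_mono) auto
    then show ?thesis by simp
  qed
  have "A - h ?y * \<Gamma> * (real m / real N) * (?n / real N)
        = ?n * (real m / real N) * (h ?x * ?g - h ?y * (\<Gamma> / real N))"
    unfolding A by (simp add: algebra_simps)
  then have "\<bar>A - h ?y * \<Gamma> * (real m / real N) * (?n / real N)\<bar>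
        = ?n * (real m / real N) * \<bar>h ?x * ?g - h ?y * (\<Gamma> / real N)\<bar>"
    by (simp add: abs_mult)
  also have "\<dots> \<le> real N * ((4 * \<Gamma>^2 * Lh + 2 * \<Gamma> * Bh) / (real N)^2)"
    using nm inner by (intro mult_mono) auto
  also have "\<dots> = (4 * \<Gamma>^2 * Lh + 2 * \<Gamma> * Bh) / real N"
    using Np by (simp add: power2_eq_square)
  finally have e2: "\<bar>A - h ?y * \<Gamma> * (real m / real N) * (?n / real N)\<bar> \<le> (4 * \<Gamma>^2 * Lh + 2 * \<Gamma> * Bh) / real N" .
  have "\<bar>E ?C (\<lambda>c. ?n * pc N j c) - h ?y * \<Gamma> * (real m / real N) * (?n / real N)\<bar>
        \<le> \<bar>E ?C (\<lambda>c. ?n * pc N j c) - A\<bar> + \<bar>A - h ?y * \<Gamma> * (real m / real N) * (?n / real N)\<bar>"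
    using abs_triangle_ineq[of "E ?C (\<lambda>c. ?n * pc N j c) - A" "A - h ?y * \<Gamma> * (real m / real N) * (?n / real N)"]
    by simp
  also have "\<dots> \<le> 2 * Cq / real N + (4 * \<Gamma>^2 * Lh + 2 * \<Gamma> * Bh) / real N"
    using e1 e2 by (rule add_mono)
  also have "\<dots> = C\<eta> / real N" unfolding C\<eta>_def by (simp add: add_divide_distrib)
  finally show ?thesis .
qed

end

context hiltF begin

definition dd :: "real \<Rightarrow> real" where "dd u = phic (beta u)"
definition G2f :: "real \<Rightarrow> real \<Rightarrow> real" where "G2f x y = h (\<Gamma> * x) * \<Gamma> * y * (1 - x - y) - y"
definition LG :: real where "LG = Lh * \<Gamma>^2 + 2 * Bh * \<Gamma> + 1"
definition Ld :: real where "Ld = Bh * \<Gamma> + 1"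

lemma LG_nonneg: "0 \<le> LG" unfolding LG_def using Lh_nonneg Bh_nonneg \<Gamma> by simp
lemma Ld_nonneg: "0 \<le> Ld" unfolding Ld_def using Bh_nonneg \<Gamma> by simp

lemma bd_range: assumes "0 \<le> u"
  shows "beta u \<in> {0..1}" "dd u \<in> {0..1}" "1 - beta u - dd u \<in> {0..1}"
proof -
  show b: "beta u \<in> {0..1}" using beta_range[OF assms] by simp
  have "0 < dd u" unfolding dd_def using bs_props(4) beta_nonneg[OF assms] by simp
  moreover have e: "1 - beta u - dd u = (1 - d0) * (1 - F (\<Gamma> * beta u))"
    unfolding dd_def phic_in[OF b] by simp
  moreover have "(1 - d0) * (1 - F (\<Gamma> * beta u)) \<in> {0..1}"
    using d0 F_le1[of "\<Gamma> * beta u"] F_nonneg[of "\<Gamma> * beta u"]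
    by (auto intro: mult_le_one mult_nonneg_nonneg)
  ultimately show "dd u \<in> {0..1}" "1 - beta u - dd u \<in> {0..1}" using b by auto
qed

lemma sol_derivs: assumes "0 \<le> u"
  shows "(beta has_real_derivative dd u) (at u within {0..})"
        "(dd has_real_derivative G2f (beta u) (dd u)) (at u within {0..})"
  using sol_exists assms unfolding hilt_ode_sol_def dd_def[abs_def] G2f_def by auto

lemma G2f_bound: assumes "x \<in> {0..1}" "y \<in> {0..1}" shows "\<bar>G2f x y\<bar> \<le> Ld"
proof -
  have gx: "0 \<le> \<Gamma> * x" "\<Gamma> * x \<le> G2"
  proof -
    show "0 \<le> \<Gamma> * x" using assms \<Gamma> by simp
    have "\<Gamma> * x \<le> \<Gamma> * 1" using assms \<Gamma> by (intro mult_left_mono) auto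
    then show "\<Gamma> * x \<le> G2" using G2 by simp
  qed
  have hb: "\<bar>h (\<Gamma> * x)\<bar> \<le> Bh" by (rule h_bound[OF gx])
  have "\<bar>1 - x - y\<bar> \<le> 1" using assms by auto
  then have "\<bar>y * (1 - x - y)\<bar> \<le> 1" using assms by (auto simp: abs_mult intro: mult_le_one)
  then have "\<bar>h (\<Gamma> * x) * \<Gamma> * (y * (1 - x - y))\<bar> \<le> Bh * \<Gamma> * 1"
    unfolding abs_mult using hb \<Gamma> Bh_nonneg by (intro mult_mono) auto
  then have "\<bar>G2f x y\<bar> \<le> Bh * \<Gamma> + \<bar>y\<bar>" unfolding G2f_def
    using abs_triangle_ineq4[of "h (\<Gamma> * x) * \<Gamma> * (y * (1 - x - y))" y] by (simp add: mult.assoc)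
  then show ?thesis unfolding Ld_def using assms by simp
qed

lemma G2f_lip:
  assumes "x \<in> {0..1}" "y \<in> {0..1}" "x' \<in> {0..1}" "y' \<in> {0..1}"
  shows "\<bar>G2f x y - G2f x' y'\<bar> \<le> LG * (\<bar>x - x'\<bar> + \<bar>y - y'\<bar>)"
proof -
  have g: "0 \<le> \<Gamma> * z \<and> \<Gamma> * z \<le> G2" if "z \<in> {0..1}" for z
  proof -
    have "\<Gamma> * z \<le> \<Gamma> * 1" using that \<Gamma> by (intro mult_left_mono) auto
    moreover have "0 \<le> \<Gamma> * z" using that \<Gamma> by simp
    ultimately show ?thesis using G2 by linarith
  qed
  let ?P = "y * (1 - x - y)" and ?P' = "y' * (1 - x' - y')"
  have P1: "\<bar>?P\<bar> \<le> 1"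
  proof -
    have "\<bar>1 - x - y\<bar> \<le> 1" using assms by auto
    then show ?thesis using assms by (auto simp: abs_mult intro: mult_le_one)
  qed
  have PP: "\<bar>?P - ?P'\<bar> \<le> \<bar>x - x'\<bar> + 2 * \<bar>y - y'\<bar>"
  proof -
    have eq: "?P - ?P' = (y - y') * (1 - x - y) + y' * ((x' - x) + (y' - y))" by (simp add: algebra_simps)
    have a: "\<bar>(y - y') * (1 - x - y)\<bar> \<le> \<bar>y - y'\<bar>"
    proof -
      have "\<bar>1 - x - y\<bar> \<le> 1" using assms by auto
      then show ?thesis by (simp add: abs_mult mult_left_le)
    qed
    have b: "\<bar>y' * ((x' - x) + (y' - y))\<bar> \<le> \<bar>x - x'\<bar> + \<bar>y - y'\<bar>"
    proof -
      have "\<bar>y' * ((x' - x) + (y' - y))\<bar> \<le> 1 * \<bar>(x' - x) + (y' - y)\<bar>"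
        unfolding abs_mult using assms by (intro mult_right_mono) auto
      also have "\<dots> \<le> \<bar>x - x'\<bar> + \<bar>y - y'\<bar>" by (simp add: abs_triangle_ineq[THEN order_trans] abs_minus_commute)
      finally show ?thesis .
    qed
    show ?thesis unfolding eq using a b abs_triangle_ineq[of "(y - y') * (1 - x - y)" "y' * ((x' - x) + (y' - y))"]
      by linarith
  qed
  have hl: "\<bar>h (\<Gamma> * x) - h (\<Gamma> * x')\<bar> \<le> Lh * \<Gamma> * \<bar>x - x'\<bar>"
  proof -
    have "\<bar>h (\<Gamma> * x) - h (\<Gamma> * x')\<bar> \<le> Lh * \<bar>\<Gamma> * x - \<Gamma> * x'\<bar>"
      using h_lip g[OF assms(1)] g[OF assms(3)] by blast
    also have "\<bar>\<Gamma> * x - \<Gamma> * x'\<bar> = \<Gamma> * \<bar>x - x'\<bar>" using \<Gamma> by (simp add: abs_mult right_diff_distrib[symmetric])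
    finally show ?thesis by (simp add: mult.assoc)
  qed
  have hb: "\<bar>h (\<Gamma> * x')\<bar> \<le> Bh" using h_bound g[OF assms(3)] by blast
  have eq: "G2f x y - G2f x' y' = (h (\<Gamma> * x) - h (\<Gamma> * x')) * \<Gamma> * ?P + h (\<Gamma> * x') * \<Gamma> * (?P - ?P') - (y - y')"
    unfolding G2f_def by (simp add: algebra_simps)
  have t1: "\<bar>(h (\<Gamma> * x) - h (\<Gamma> * x')) * \<Gamma> * ?P\<bar> \<le> Lh * \<Gamma> * \<bar>x - x'\<bar> * \<Gamma> * 1"
    unfolding abs_mult using hl P1 \<Gamma> Lh_nonneg by (intro mult_mono) auto
  have t2: "\<bar>h (\<Gamma> * x') * \<Gamma> * (?P - ?P')\<bar> \<le> Bh * \<Gamma> * (\<bar>x - x'\<bar> + 2 * \<bar>y - y'\<bar>)"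
    unfolding abs_mult using hb PP \<Gamma> Bh_nonneg by (intro mult_mono) auto
  have "\<bar>G2f x y - G2f x' y'\<bar> \<le> Lh * \<Gamma> * \<bar>x - x'\<bar> * \<Gamma> * 1 + Bh * \<Gamma> * (\<bar>x - x'\<bar> + 2 * \<bar>y - y'\<bar>) + \<bar>y - y'\<bar>"
    unfolding eq using t1 t2
      abs_triangle_ineq[of "(h (\<Gamma> * x) - h (\<Gamma> * x')) * \<Gamma> * ?P" "h (\<Gamma> * x') * \<Gamma> * (?P - ?P')"]
      abs_triangle_ineq4[of "(h (\<Gamma> * x) - h (\<Gamma> * x')) * \<Gamma> * ?P + h (\<Gamma> * x') * \<Gamma> * (?P - ?P')" "y - y'"]
    by linarith
  also have "\<dots> \<le> LG * (\<bar>x - x'\<bar> + \<bar>y - y'\<bar>)"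
  proof -
    have "Lh * \<Gamma> * \<bar>x - x'\<bar> * \<Gamma> * 1 + Bh * \<Gamma> * (\<bar>x - x'\<bar> + 2 * \<bar>y - y'\<bar>) + \<bar>y - y'\<bar>
          = (Lh * \<Gamma>^2 + Bh * \<Gamma>) * \<bar>x - x'\<bar> + (2 * Bh * \<Gamma> + 1) * \<bar>y - y'\<bar>"
      by (simp add: algebra_simps power2_eq_square)
    also have "\<dots> \<le> LG * \<bar>x - x'\<bar> + LG * \<bar>y - y'\<bar>"
    proof -
      have p1: "0 \<le> Bh * \<Gamma>" "0 \<le> Lh * \<Gamma>^2" using Bh_nonneg Lh_nonneg \<Gamma> by auto
      have c1: "Lh * \<Gamma>^2 + Bh * \<Gamma> \<le> LG" unfolding LG_def using p1 by linarith
      have c2: "2 * Bh * \<Gamma> + 1 \<le> LG" unfolding LG_def using p1 by linarith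
      show ?thesis by (intro add_mono mult_right_mono c1 c2) auto
    qed
    finally show ?thesis by (simp add: algebra_simps)
  qed
  finally show ?thesis .
qed

lemma beta_lip: assumes "0 \<le> s" "0 \<le> t" shows "\<bar>beta s - beta t\<bar> \<le> \<bar>s - t\<bar>"
proof -
  have "norm (beta s - beta t) \<le> 1 * norm (s - t)"
  proof (rule field_differentiable_bound[of "{0..}" beta dd])
    fix z :: real assume "z \<in> {0..}"
    then show "(beta has_field_derivative dd z) (at z within {0..})" using sol_derivs by simp
    show "norm (dd z) \<le> 1" using bd_range(2)[of z] \<open>z \<in> {0..}\<close> by auto
  qed (use assms in auto)
  then show ?thesis by simp
qed

lemma dd_lip: assumes "0 \<le> s" "0 \<le> t" shows "\<bar>dd s - dd t\<bar> \<le> Ld * \<bar>s - t\<bar>"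
proof -
  have "norm (dd s - dd t) \<le> Ld * norm (s - t)"
  proof (rule field_differentiable_bound[of "{0..}" dd "\<lambda>z. G2f (beta z) (dd z)"])
    fix z :: real assume "z \<in> {0..}"
    then show "(dd has_field_derivative G2f (beta z) (dd z)) (at z within {0..})" using sol_derivs by simp
    show "norm (G2f (beta z) (dd z)) \<le> Ld" using G2f_bound bd_range \<open>z \<in> {0..}\<close> by auto
  qed (use assms in auto)
  then show ?thesis by simp
qed

lemma resid_b: assumes t: "0 \<le> t" and \<tau>: "0 \<le> \<tau>"
  shows "\<bar>beta (t + \<tau>) - beta t - \<tau> * dd t\<bar> \<le> Ld * \<tau>^2"
proof -
  let ?g = "\<lambda>s. beta s - s * dd t"
  have "norm (?g (t + \<tau>) - ?g t) \<le> (Ld * \<tau>) * norm (t + \<tau> - t)"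
  proof (rule field_differentiable_bound[of "{t..t+\<tau>}" ?g "\<lambda>s. dd s - dd t"])
    fix z :: real assume z: "z \<in> {t..t+\<tau>}"
    then have z0: "0 \<le> z" using t by simp
    have "(beta has_field_derivative dd z) (at z within {t..t+\<tau>})"
      using has_field_derivative_subset[OF sol_derivs(1)[OF z0]] t by auto
    then show "(?g has_field_derivative dd z - dd t) (at z within {t..t+\<tau>})"
      by (auto intro!: derivative_eq_intros)
    have "\<bar>dd z - dd t\<bar> \<le> Ld * \<bar>z - t\<bar>" by (rule dd_lip[OF z0 t])
    also have "\<dots> \<le> Ld * \<tau>" using z Ld_nonneg by (intro mult_left_mono) auto
    finally show "norm (dd z - dd t) \<le> Ld * \<tau>" by simp
  qed (use \<tau> in auto)
  then show ?thesis using \<tau> by (simp add: power2_eq_square algebra_simps)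
qed

lemma resid_d: assumes t: "0 \<le> t" and \<tau>: "0 \<le> \<tau>"
  shows "\<bar>dd (t + \<tau>) - dd t - \<tau> * G2f (beta t) (dd t)\<bar> \<le> LG * (1 + Ld) * \<tau>^2"
proof -
  let ?g = "\<lambda>s. dd s - s * G2f (beta t) (dd t)"
  have "norm (?g (t + \<tau>) - ?g t) \<le> (LG * (1 + Ld) * \<tau>) * norm (t + \<tau> - t)"
  proof (rule field_differentiable_bound[of "{t..t+\<tau>}" ?g "\<lambda>s. G2f (beta s) (dd s) - G2f (beta t) (dd t)"])
    fix z :: real assume z: "z \<in> {t..t+\<tau>}"
    then have z0: "0 \<le> z" using t by simp
    have "(dd has_field_derivative G2f (beta z) (dd z)) (at z within {t..t+\<tau>})"
      using has_field_derivative_subset[OF sol_derivs(2)[OF z0]] t by auto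
    then show "(?g has_field_derivative G2f (beta z) (dd z) - G2f (beta t) (dd t)) (at z within {t..t+\<tau>})"
      by (auto intro!: derivative_eq_intros)
    have zt: "\<bar>z - t\<bar> \<le> \<tau>" using z by auto
    have "\<bar>G2f (beta z) (dd z) - G2f (beta t) (dd t)\<bar> \<le> LG * (\<bar>beta z - beta t\<bar> + \<bar>dd z - dd t\<bar>)"
      using G2f_lip bd_range z0 t by blast
    also have "\<dots> \<le> LG * (\<tau> + Ld * \<tau>)"
    proof -
      have "\<bar>beta z - beta t\<bar> \<le> \<tau>" using beta_lip[OF z0 t] zt by linarith
      moreover have "\<bar>dd z - dd t\<bar> \<le> Ld * \<tau>"
        using dd_lip[OF z0 t] mult_left_mono[OF zt Ld_nonneg] by linarith
      ultimately show ?thesis using LG_nonneg by (intro mult_left_mono) auto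
    qed
    finally show "norm (G2f (beta z) (dd z) - G2f (beta t) (dd t)) \<le> LG * (1 + Ld) * \<tau>"
      by (simp add: algebra_simps)
  qed (use \<tau> in auto)
  then show ?thesis using \<tau> by (simp add: power2_eq_square algebra_simps)
qed

end

lemma E_sq_expand: "finite (set_pmf p) \<Longrightarrow>
  E p (\<lambda>e. (real e - a)^2) = E p (\<lambda>e. (real e)^2) - 2 * a * E p real + a^2"
proof -
  assume fin: "finite (set_pmf p)"
  have "E p (\<lambda>e. (real e - a)^2) = E p (\<lambda>e. (real e)^2 - 2 * a * real e + a^2)"
    by (simp add: power2_eq_square algebra_simps)
  also have "\<dots> = E p (\<lambda>e. (real e)^2) - 2 * a * E p real + a^2"
    using fin by (simp add: E_add E_diff E_const)
  finally show ?thesis .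
qed


lemma sq_step:
  fixes N u X \<delta> :: real
  assumes N: "1 \<le> N" and d: "\<bar>X - u\<bar> \<le> \<delta> / N"
  shows "X^2 \<le> (1 + 1 / N) * u^2 + 2 * \<delta>^2 / N"
proof -
  define e where "e = X - u"
  have Np: "0 < N" using N by simp
  have X: "X = u + e" unfolding e_def by simp
  have e2: "e^2 \<le> (\<delta> / N)^2"
  proof -
    have "\<bar>e\<bar> \<le> \<delta> / N" using d unfolding e_def .
    then have "\<bar>e\<bar>^2 \<le> (\<delta> / N)^2" by (rule power_mono) simp
    then show ?thesis by simp
  qed
  have am: "2 * u * e \<le> u^2 / N + N * e^2"
  proof -
    have "0 \<le> (u - N * e)^2" by simp
    then have "2 * N * (u * e) \<le> u^2 + N^2 * e^2" by (simp add: power2_eq_square algebra_simps)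
    then have "2 * (u * e) \<le> (u^2 + N^2 * e^2) / N" using Np by (simp add: field_simps)
    also have "\<dots> = u^2 / N + N * e^2" using Np by (simp add: field_simps power2_eq_square)
    finally show ?thesis by simp
  qed
  have "X^2 = u^2 + 2 * u * e + e^2" unfolding X by (simp add: power2_eq_square algebra_simps)
  also have "\<dots> \<le> u^2 + u^2 / N + (N + 1) * e^2" using am by (simp add: algebra_simps)
  also have "\<dots> \<le> u^2 + u^2 / N + (N + 1) * (\<delta> / N)^2" using e2 Np by (intro add_left_mono mult_left_mono) auto
  also have "(N + 1) * (\<delta> / N)^2 = (N + 1) / N * (\<delta>^2 / N)" using Np by (simp add: power2_eq_square field_simps)
  also have "\<dots> \<le> 2 * (\<delta>^2 / N)"
  proof (rule mult_right_mono)
    show "(N + 1) / N \<le> 2" using N Np by (simp add: field_simps)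
  qed (use Np in simp)
  finally show ?thesis by (simp add: algebra_simps)
qed

lemma final_alg:
  fixes N u v EB ED Ld LG C\<eta> Cv :: real
  assumes N: "1 \<le> N" and nn: "0 \<le> Ld" "0 \<le> LG" "0 \<le> C\<eta>" "0 \<le> Cv"
    and B: "EB \<le> 2 / N^2 + ((1 + 1 / N) * u^2 + 2 * (\<bar>v\<bar> + Ld / N)^2 / N)"
    and D: "ED \<le> Cv / N^2 + ((1 + 1 / N) * v^2 + 2 * (LG * (\<bar>u\<bar> + \<bar>v\<bar>) + C\<eta> / N + LG * (1 + Ld) / N)^2 / N)"
  shows "EB + ED \<le> (1 + (5 + 12 * LG^2) / N) * (u^2 + v^2)
             + (2 + Cv + 4 * Ld^2 + 6 * (C\<eta>^2 + LG^2 * (1 + Ld)^2)) / N^2"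
proof -
  have Np: "0 < N" using N by simp
  have s2: "(a + b)^2 \<le> 2 * a^2 + 2 * b^2" for a b :: real
  proof -
    have "0 \<le> (a - b)^2" by simp
    then show ?thesis by (simp add: power2_eq_square algebra_simps)
  qed
  have s3: "(a + b + c)^2 \<le> 3 * a^2 + 3 * b^2 + 3 * c^2" for a b c :: real
  proof -
    have "0 \<le> (a - b)^2 + (b - c)^2 + (a - c)^2" by simp
    then show ?thesis by (simp add: power2_eq_square algebra_simps)
  qed
  have uv: "(\<bar>u\<bar> + \<bar>v\<bar>)^2 \<le> 2 * u^2 + 2 * v^2" using s2[of "\<bar>u\<bar>" "\<bar>v\<bar>"] by simp
  have b1: "(\<bar>v\<bar> + Ld / N)^2 \<le> 2 * v^2 + 2 * Ld^2 / N^2"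
    using s2[of "\<bar>v\<bar>" "Ld / N"] by (simp add: power_divide)
  have d1: "(LG * (\<bar>u\<bar> + \<bar>v\<bar>) + C\<eta> / N + LG * (1 + Ld) / N)^2 \<le>
            3 * (LG^2 * (2 * u^2 + 2 * v^2)) + 3 * (C\<eta>^2 / N^2) + 3 * (LG^2 * (1 + Ld)^2 / N^2)"
  proof -
    have "(LG * (\<bar>u\<bar> + \<bar>v\<bar>) + C\<eta> / N + LG * (1 + Ld) / N)^2 \<le>
          3 * (LG * (\<bar>u\<bar> + \<bar>v\<bar>))^2 + 3 * (C\<eta> / N)^2 + 3 * (LG * (1 + Ld) / N)^2" by (rule s3)
    also have "(LG * (\<bar>u\<bar> + \<bar>v\<bar>))^2 \<le> LG^2 * (2 * u^2 + 2 * v^2)"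
      unfolding power_mult_distrib using uv by (intro mult_left_mono) auto
    finally show ?thesis by (simp add: power_divide power_mult_distrib)
  qed
  have iN: "1 / N \<le> 1" using N by simp
  have iN2: "1 / N^2 \<le> 1" using N by (simp add: one_le_power)
  have e1: "2 * (\<bar>v\<bar> + Ld / N)^2 / N \<le> 4 * v^2 / N + 4 * Ld^2 / N^2"
  proof -
    have "2 * (\<bar>v\<bar> + Ld / N)^2 / N \<le> 2 * (2 * v^2 + 2 * Ld^2 / N^2) / N"
      using b1 Np by (intro divide_right_mono mult_left_mono) auto
    also have "\<dots> = 4 * v^2 / N + 4 * Ld^2 / N^2 * (1 / N)" using Np by (simp add: field_simps)
    also have "\<dots> \<le> 4 * v^2 / N + 4 * Ld^2 / N^2 * 1"
      using iN nn Np by (intro add_left_mono mult_left_mono) auto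
    finally show ?thesis by simp
  qed
  have e2: "2 * (LG * (\<bar>u\<bar> + \<bar>v\<bar>) + C\<eta> / N + LG * (1 + Ld) / N)^2 / N
        \<le> 12 * LG^2 * (u^2 + v^2) / N + 6 * (C\<eta>^2 + LG^2 * (1 + Ld)^2) / N^2"
  proof -
    have "2 * (LG * (\<bar>u\<bar> + \<bar>v\<bar>) + C\<eta> / N + LG * (1 + Ld) / N)^2 / N \<le>
          2 * (3 * (LG^2 * (2 * u^2 + 2 * v^2)) + 3 * (C\<eta>^2 / N^2) + 3 * (LG^2 * (1 + Ld)^2 / N^2)) / N"
      using d1 Np by (intro divide_right_mono mult_left_mono) auto
    also have "\<dots> = 12 * LG^2 * (u^2 + v^2) / N + 6 * (C\<eta>^2 + LG^2 * (1 + Ld)^2) / N^2 * (1 / N)"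
      using Np by (simp add: field_simps)
    also have "\<dots> \<le> 12 * LG^2 * (u^2 + v^2) / N + 6 * (C\<eta>^2 + LG^2 * (1 + Ld)^2) / N^2 * 1"
      using iN nn Np by (intro add_left_mono mult_left_mono) auto
    finally show ?thesis by simp
  qed
  have "EB + ED \<le> 2 / N^2 + ((1 + 1 / N) * u^2 + (4 * v^2 / N + 4 * Ld^2 / N^2))
                 + (Cv / N^2 + ((1 + 1 / N) * v^2 + (12 * LG^2 * (u^2 + v^2) / N + 6 * (C\<eta>^2 + LG^2 * (1 + Ld)^2) / N^2)))"
    using B D e1 e2 by linarith
  also have "\<dots> = (1 + 1 / N) * (u^2 + v^2) + 4 * v^2 / N + 12 * LG^2 * (u^2 + v^2) / N
                 + (2 + Cv + 4 * Ld^2 + 6 * (C\<eta>^2 + LG^2 * (1 + Ld)^2)) / N^2"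
    using Np by (simp add: field_simps)
  also have "\<dots> \<le> (1 + 1 / N) * (u^2 + v^2) + 4 * (u^2 + v^2) / N + 12 * LG^2 * (u^2 + v^2) / N
                 + (2 + Cv + 4 * Ld^2 + 6 * (C\<eta>^2 + LG^2 * (1 + Ld)^2)) / N^2"
    using Np by (simp add: divide_right_mono)
  also have "\<dots> = (1 + (5 + 12 * LG^2) / N) * (u^2 + v^2)
             + (2 + Cv + 4 * Ld^2 + 6 * (C\<eta>^2 + LG^2 * (1 + Ld)^2)) / N^2"
    using Np by (simp add: field_simps)
  finally show ?thesis .
qed


context hiltF begin

definition Cv :: real where "Cv = K3 + 2 * (K3^2 + 1)"

lemma step_moments:
  assumes N: "N0 \<le> N" and v: "j + m \<le> N"
  shows "E (hilt_step F \<Gamma> N (j, m)) (\<lambda>s'. real (fst s')) = real j + real m / real N"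
    "E (hilt_step F \<Gamma> N (j, m)) (\<lambda>s'. (real (fst s') - real j)^2) \<le> 2"
    "E (hilt_step F \<Gamma> N (j, m)) (\<lambda>s'. real (snd s')) =
       real m - real m / real N + E (binomial_pmf m (1 / real N)) (\<lambda>c. real (N - j - m) * pc N j c)"
    "E (hilt_step F \<Gamma> N (j, m)) (\<lambda>s'. (real (snd s') - real m)^2) \<le> Cv"
proof -
  have N2: "2 \<le> N" using N0(1)[OF N] .
  let ?C = "binomial_pmf m (1 / real N)" and ?B = "\<lambda>c. binomial_pmf (N - j - m) (pc N j c)"
  have finC: "finite (set_pmf ?C)" using q_range by auto
  have finB: "\<And>c. finite (set_pmf (?B c))" using pc_range[OF N2] by auto
  have mN: "m \<le> N" using v by simp
  note cm = c_moments[OF mN]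
  have cle: "c \<le> m" if "c \<in> set_pmf ?C" for c by (rule binom_set[OF q_range that])
  note Es = E_step[OF N2, of j m]
  show "E (hilt_step F \<Gamma> N (j, m)) (\<lambda>s'. real (fst s')) = real j + real m / real N"
    unfolding Es using finC cm(1) by (simp add: E_const E_add)
  show "E (hilt_step F \<Gamma> N (j, m)) (\<lambda>s'. (real (fst s') - real j)^2) \<le> 2"
    unfolding Es using cm(2) by (simp add: E_const)
  have inner3: "E (?B c) (\<lambda>e. real (m - c + e)) = real m - real c + real (N - j - m) * pc N j c"
    if "c \<in> set_pmf ?C" for c
  proof -
    have "E (?B c) (\<lambda>e. real (m - c + e)) = E (?B c) (\<lambda>e. (real m - real c) + real e)"
      using cle[OF that] by (intro E_cong) (simp add: of_nat_diff)
    also have "\<dots> = real m - real c + real (N - j - m) * pc N j c"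
      using finB binom_mean[OF pc_range[OF N2]] by (simp add: E_add E_const)
    finally show ?thesis .
  qed
  have "E (hilt_step F \<Gamma> N (j, m)) (\<lambda>s'. real (snd s')) =
        E ?C (\<lambda>c. real m - real c + real (N - j - m) * pc N j c)"
    unfolding Es
  proof (intro E_cong)
    fix c assume c: "c \<in> set_pmf ?C"
    show "E (?B c) (\<lambda>e. real (snd (j + c, m - c + e))) = real m - real c + real (N - j - m) * pc N j c"
      using inner3[OF c] by simp
  qed
  also have "\<dots> = real m - real m / real N + E ?C (\<lambda>c. real (N - j - m) * pc N j c)"
    using finC cm(1) by (simp add: E_add E_diff E_const)
  finally show "E (hilt_step F \<Gamma> N (j, m)) (\<lambda>s'. real (snd s')) =
       real m - real m / real N + E ?C (\<lambda>c. real (N - j - m) * pc N j c)" .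
  have inner4: "E (?B c) (\<lambda>e. (real (m - c + e) - real m)^2) \<le> K3 * real c + (K3^2 + 1) * (real c)^2"
    if c: "c \<in> set_pmf ?C" for c
  proof -
    let ?p = "pc N j c" and ?n = "real (N - j - m)"
    have "E (?B c) (\<lambda>e. (real (m - c + e) - real m)^2) = E (?B c) (\<lambda>e. (real e - real c)^2)"
      using cle[OF c] by (intro E_cong) (simp add: of_nat_diff power2_eq_square algebra_simps)
    also have "\<dots> = E (?B c) (\<lambda>e. (real e)^2) - 2 * real c * E (?B c) real + (real c)^2"
      by (rule E_sq_expand[OF finB])
    also have "\<dots> \<le> (?n * ?p + (?n * ?p)^2) - 0 + (real c)^2"
    proof -
      have "E (?B c) (\<lambda>e. (real e)^2) \<le> ?n * ?p + (?n * ?p)^2"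
        using binom_sq_le[OF pc_range[OF N2]] by simp
      moreover have "0 \<le> 2 * real c * E (?B c) real"
        using binom_mean[OF pc_range[OF N2]] pc_range[OF N2, of j c] by simp
      ultimately show ?thesis by linarith
    qed
    also have "\<dots> \<le> K3 * real c + (K3 * real c)^2 + (real c)^2"
    proof -
      have a: "?n * ?p \<le> K3 * real c" by (rule npc_bounds(2)[OF N v])
      have b: "0 \<le> ?n * ?p" by (rule npc_bounds(1)[OF N v])
      have "(?n * ?p)^2 \<le> (K3 * real c)^2" using a b by (rule power_mono)
      then show ?thesis using a by linarith
    qed
    also have "\<dots> = K3 * real c + (K3^2 + 1) * (real c)^2" by (simp add: power_mult_distrib algebra_simps)
    finally show ?thesis .
  qed
  have "E (hilt_step F \<Gamma> N (j, m)) (\<lambda>s'. (real (snd s') - real m)^2)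
        \<le> E ?C (\<lambda>c. K3 * real c + (K3^2 + 1) * (real c)^2)"
    unfolding Es
  proof (rule E_mono[OF finC])
    fix c assume c: "c \<in> set_pmf ?C"
    show "E (?B c) (\<lambda>e. (real (snd (j + c, m - c + e)) - real m)^2) \<le> K3 * real c + (K3^2 + 1) * (real c)^2"
      using inner4[OF c] by simp
  qed
  also have "\<dots> = K3 * (real m / real N) + (K3^2 + 1) * E ?C (\<lambda>c. (real c)^2)"
    using finC cm(1) by (simp add: E_add)
  also have "\<dots> \<le> K3 * 1 + (K3^2 + 1) * 2"
  proof (intro add_mono mult_left_mono)
    show "real m / real N \<le> 1" using mN N2 by simp
    show "E ?C (\<lambda>c. (real c)^2) \<le> 2" by (rule cm(2))
  qed (use K3_nonneg in auto)
  finally show "E (hilt_step F \<Gamma> N (j, m)) (\<lambda>s'. (real (snd s') - real m)^2) \<le> Cv"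
    unfolding Cv_def by simp
qed

lemma sqdiv: "((a::real) / c - b / c)^2 = (a - b)^2 / c^2"
  by (simp add: diff_divide_distrib[symmetric] power_divide)

definition C1 :: real where "C1 = 5 + 12 * LG^2"
definition C2 :: real where "C2 = 2 + Cv + 4 * Ld^2 + 6 * (C\<eta>^2 + LG^2 * (1 + Ld)^2)"
definition errf :: "nat \<Rightarrow> real \<Rightarrow> nat \<times> nat \<Rightarrow> real" where
  "errf N t s = (real (fst s) / real N - beta t)^2 + (real (snd s) / real N - dd t)^2"

lemma Cv_nonneg: "0 \<le> Cv" unfolding Cv_def using K3_nonneg by simp
lemma C\<eta>_nonneg: "0 \<le> C\<eta>" unfolding C\<eta>_def using Cq_nonneg Lh_nonneg Bh_nonneg \<Gamma> by simp

lemma err_step: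
  assumes N: "N0 \<le> N" and v: "j + m \<le> N" and t: "0 \<le> t"
  shows "E (hilt_step F \<Gamma> N (j, m)) (errf N (t + 1 / real N)) \<le> (1 + C1 / real N) * errf N t (j, m) + C2 / (real N)^2"
proof -
  have N2: "2 \<le> N" using N0(1)[OF N] .
  have Np: "0 < real N" using N2 by simp
  have N1: "1 \<le> real N" using N2 by simp
  let ?P = "hilt_step F \<Gamma> N (j, m)"
  have finP: "finite (set_pmf ?P)" by (rule step_fin[OF N2])
  let ?\<tau> = "1 / real N"
  have \<tau>0: "0 \<le> ?\<tau>" by simp
  define u where "u = real j / real N - beta t"
  define w where "w = real m / real N - dd t"
  note sm = step_moments[OF N v]
  let ?tB = "beta (t + ?\<tau>)" and ?tD = "dd (t + ?\<tau>)"
  let ?ZB = "\<lambda>s'. real (fst s') / real N" and ?ZD = "\<lambda>s'. real (snd s') / real N"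
  have split: "E ?P (errf N (t + ?\<tau>)) = E ?P (\<lambda>s'. (?ZB s' - ?tB)^2) + E ?P (\<lambda>s'. (?ZD s' - ?tD)^2)"
    unfolding errf_def using finP by (simp add: E_add)
  have vB: "E ?P (\<lambda>s'. (?ZB s' - real j / real N)^2) \<le> 2 / (real N)^2"
  proof -
    have "E ?P (\<lambda>s'. (?ZB s' - real j / real N)^2) = E ?P (\<lambda>s'. (real (fst s') - real j)^2 / (real N)^2)"
      by (intro E_cong) (rule sqdiv)
    also have "\<dots> = E ?P (\<lambda>s'. (real (fst s') - real j)^2) / (real N)^2" by simp
    also have "\<dots> \<le> 2 / (real N)^2" using sm(2) by (simp add: divide_right_mono)
    finally show ?thesis .
  qed
  have mB: "E ?P ?ZB = (real j + real m / real N) / real N" using sm(1) by simp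
  have rB: "\<bar>beta (t + ?\<tau>) - beta t - ?\<tau> * dd t\<bar> \<le> Ld * ?\<tau>^2" by (rule resid_b[OF t \<tau>0])
  have dB: "\<bar>E ?P ?ZB - ?tB - u\<bar> \<le> (\<bar>w\<bar> + Ld / real N) / real N"
  proof -
    have "E ?P ?ZB - ?tB - u = w / real N - (beta (t + ?\<tau>) - beta t - ?\<tau> * dd t)"
      unfolding mB u_def w_def using Np by (simp add: field_simps)
    then have "\<bar>E ?P ?ZB - ?tB - u\<bar> \<le> \<bar>w\<bar> / real N + Ld * ?\<tau>^2"
      using rB abs_triangle_ineq4[of "w / real N" "beta (t + ?\<tau>) - beta t - ?\<tau> * dd t"] Np
      by (simp add: abs_div)
    also have "\<dots> = (\<bar>w\<bar> + Ld / real N) / real N" using Np by (simp add: field_simps power2_eq_square)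
    finally show ?thesis .
  qed
  have EB: "E ?P (\<lambda>s'. (?ZB s' - ?tB)^2) \<le> 2 / (real N)^2 + ((1 + 1 / real N) * u^2 + 2 * (\<bar>w\<bar> + Ld / real N)^2 / real N)"
  proof -
    have "E ?P (\<lambda>s'. (?ZB s' - ?tB)^2) \<le> E ?P (\<lambda>s'. (?ZB s' - real j / real N)^2) + (E ?P ?ZB - ?tB)^2"
      by (rule E_sq_shift[OF finP])
    moreover have "(E ?P ?ZB - ?tB)^2 \<le> (1 + 1 / real N) * u^2 + 2 * (\<bar>w\<bar> + Ld / real N)^2 / real N"
      by (rule sq_step[OF N1]) (use dB in simp)
    ultimately show ?thesis using vB by linarith
  qed
  let ?En = "E (binomial_pmf m (1 / real N)) (\<lambda>c. real (N - j - m) * pc N j c)"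
  have vD: "E ?P (\<lambda>s'. (?ZD s' - real m / real N)^2) \<le> Cv / (real N)^2"
  proof -
    have "E ?P (\<lambda>s'. (?ZD s' - real m / real N)^2) = E ?P (\<lambda>s'. (real (snd s') - real m)^2 / (real N)^2)"
      by (intro E_cong) (rule sqdiv)
    also have "\<dots> = E ?P (\<lambda>s'. (real (snd s') - real m)^2) / (real N)^2" by simp
    also have "\<dots> \<le> Cv / (real N)^2" using sm(4) by (simp add: divide_right_mono)
    finally show ?thesis .
  qed
  have mD: "E ?P ?ZD = (real m - real m / real N + ?En) / real N" using sm(3) by simp
  have rD: "\<bar>dd (t + ?\<tau>) - dd t - ?\<tau> * G2f (beta t) (dd t)\<bar> \<le> LG * (1 + Ld) * ?\<tau>^2"
    by (rule resid_d[OF t \<tau>0])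
  have xr: "real j / real N \<in> {0..1}" "real m / real N \<in> {0..1}" using v Np by auto
  have nN: "real (N - j - m) / real N = 1 - real j / real N - real m / real N"
    using v Np by (simp add: of_nat_diff field_simps)
  have G2x: "G2f (real j / real N) (real m / real N) =
             h (\<Gamma> * (real j / real N)) * \<Gamma> * (real m / real N) * (real (N - j - m) / real N) - real m / real N"
    unfolding G2f_def nN by simp
  have dr: "\<bar>?En - h (\<Gamma> * (real j / real N)) * \<Gamma> * (real m / real N) * (real (N - j - m) / real N)\<bar> \<le> C\<eta> / real N"
    by (rule drift[OF N v])
  have gl: "\<bar>G2f (real j / real N) (real m / real N) - G2f (beta t) (dd t)\<bar> \<le> LG * (\<bar>u\<bar> + \<bar>w\<bar>)"
    unfolding u_def w_def by (rule G2f_lip[OF xr bd_range(1)[OF t] bd_range(2)[OF t]])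
  have inner: "\<bar>?En - real m / real N - G2f (beta t) (dd t)\<bar> \<le> C\<eta> / real N + LG * (\<bar>u\<bar> + \<bar>w\<bar>)"
  proof -
    have "?En - real m / real N - G2f (beta t) (dd t) =
          (?En - h (\<Gamma> * (real j / real N)) * \<Gamma> * (real m / real N) * (real (N - j - m) / real N))
          + (G2f (real j / real N) (real m / real N) - G2f (beta t) (dd t))"
      unfolding G2x by simp
    then show ?thesis using dr gl abs_triangle_ineq[of "?En - h (\<Gamma> * (real j / real N)) * \<Gamma> * (real m / real N) * (real (N - j - m) / real N)"
          "G2f (real j / real N) (real m / real N) - G2f (beta t) (dd t)"] by linarith
  qed
  have dD: "\<bar>E ?P ?ZD - ?tD - w\<bar> \<le> (LG * (\<bar>u\<bar> + \<bar>w\<bar>) + C\<eta> / real N + LG * (1 + Ld) / real N) / real N"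
  proof -
    define A where "A = ?En - real m / real N - G2f (beta t) (dd t)"
    define R where "R = dd (t + ?\<tau>) - dd t - ?\<tau> * G2f (beta t) (dd t)"
    have eq: "E ?P ?ZD - ?tD - w = A / real N - R"
      unfolding mD w_def A_def R_def using Np by (simp add: field_simps)
    have "\<bar>E ?P ?ZD - ?tD - w\<bar> \<le> \<bar>A / real N\<bar> + \<bar>R\<bar>" unfolding eq by (rule abs_triangle_ineq4)
    also have "\<bar>A / real N\<bar> = \<bar>A\<bar> / real N" using Np by (simp add: abs_div)
    finally have "\<bar>E ?P ?ZD - ?tD - w\<bar> \<le> \<bar>?En - real m / real N - G2f (beta t) (dd t)\<bar> / real N + LG * (1 + Ld) * ?\<tau>^2"
      using rD unfolding A_def R_def by linarith
    also have "\<dots> \<le> (C\<eta> / real N + LG * (\<bar>u\<bar> + \<bar>w\<bar>)) / real N + LG * (1 + Ld) * ?\<tau>^2"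
      using inner Np by (simp add: divide_right_mono)
    also have "\<dots> = (LG * (\<bar>u\<bar> + \<bar>w\<bar>) + C\<eta> / real N + LG * (1 + Ld) / real N) / real N"
      using Np by (simp add: field_simps power2_eq_square)
    finally show ?thesis .
  qed
  have ED: "E ?P (\<lambda>s'. (?ZD s' - ?tD)^2) \<le> Cv / (real N)^2 + ((1 + 1 / real N) * w^2
              + 2 * (LG * (\<bar>u\<bar> + \<bar>w\<bar>) + C\<eta> / real N + LG * (1 + Ld) / real N)^2 / real N)"
  proof -
    have "E ?P (\<lambda>s'. (?ZD s' - ?tD)^2) \<le> E ?P (\<lambda>s'. (?ZD s' - real m / real N)^2) + (E ?P ?ZD - ?tD)^2"
      by (rule E_sq_shift[OF finP])
    moreover have "(E ?P ?ZD - ?tD)^2 \<le> (1 + 1 / real N) * w^2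
              + 2 * (LG * (\<bar>u\<bar> + \<bar>w\<bar>) + C\<eta> / real N + LG * (1 + Ld) / real N)^2 / real N"
      by (rule sq_step[OF N1]) (use dD in simp)
    ultimately show ?thesis using vD by linarith
  qed
  have "E ?P (errf N (t + ?\<tau>)) \<le> (1 + (5 + 12 * LG^2) / real N) * (u^2 + w^2)
             + (2 + Cv + 4 * Ld^2 + 6 * (C\<eta>^2 + LG^2 * (1 + Ld)^2)) / (real N)^2"
    unfolding split by (rule final_alg[OF N1 Ld_nonneg LG_nonneg C\<eta>_nonneg Cv_nonneg EB ED])
  moreover have "errf N t (j, m) = u^2 + w^2" unfolding errf_def u_def w_def by simp
  ultimately show ?thesis unfolding C1_def C2_def by simp
qed

end

context hiltF begin

definition Qf :: "nat \<Rightarrow> nat \<times> nat \<Rightarrow> nat \<Rightarrow> real" where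
  "Qf N s0 k = E (chainp N s0 k) (errf N (real k / real N))"

lemma errf_nonneg: "0 \<le> errf N t s" unfolding errf_def by simp

lemma Q_rec:
  assumes N: "N0 \<le> N" and s0: "fst s0 + snd s0 \<le> N"
  shows "Qf N s0 (Suc k) \<le> (1 + C1 / real N) * Qf N s0 k + C2 / (real N)^2"
proof -
  have N2: "2 \<le> N" using N0(1)[OF N] .
  note cs = chain_supp[OF N2 s0, of k]
  have t: "real (Suc k) / real N = real k / real N + 1 / real N" by (simp add: add_divide_distrib)
  have "Qf N s0 (Suc k) = E (chainp N s0 k) (\<lambda>s. E (hilt_step F \<Gamma> N s) (errf N (real k / real N + 1 / real N)))"
    unfolding Qf_def t by (rule E_chain_Suc[OF N2 s0])
  also have "\<dots> \<le> E (chainp N s0 k) (\<lambda>s. (1 + C1 / real N) * errf N (real k / real N) s + C2 / (real N)^2)"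
  proof (rule E_mono)
    show "finite (set_pmf (chainp N s0 k))" using cs by blast
    fix s assume s: "s \<in> set_pmf (chainp N s0 k)"
    obtain j m where jm: "s = (j, m)" by (cases s)
    have "j + m \<le> N" using cs s jm by auto
    then show "E (hilt_step F \<Gamma> N s) (errf N (real k / real N + 1 / real N))
          \<le> (1 + C1 / real N) * errf N (real k / real N) s + C2 / (real N)^2"
      unfolding jm by (rule err_step[OF N]) simp
  qed
  also have "\<dots> = (1 + C1 / real N) * Qf N s0 k + C2 / (real N)^2"
    unfolding Qf_def using cs by (simp add: E_add E_const)
  finally show ?thesis .
qed

lemma alg_pow: "(a::real) * (a^k * (q + r * b)) + a^Suc k * b = a^Suc k * (q + (r + 1) * b)"
  by (simp add: algebra_simps)

lemma C1_nonneg: "0 \<le> C1" unfolding C1_def by simp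
lemma C2_nonneg: "0 \<le> C2" unfolding C2_def using Cv_nonneg by simp

lemma Q_bound:
  assumes N: "N0 \<le> N" and s0: "fst s0 + snd s0 \<le> N"
  shows "Qf N s0 k \<le> (1 + C1 / real N)^k * (Qf N s0 0 + real k * C2 / (real N)^2)"
proof (induction k)
  case 0 then show ?case by simp
next
  case (Suc k)
  let ?a = "1 + C1 / real N" and ?b = "C2 / (real N)^2"
  have a1: "1 \<le> ?a" using C1_nonneg by simp
  have b0: "0 \<le> ?b" using C2_nonneg by simp
  have q0: "0 \<le> Qf N s0 0" unfolding Qf_def by (intro E_nonneg errf_nonneg)
  have "Qf N s0 (Suc k) \<le> ?a * Qf N s0 k + ?b" by (rule Q_rec[OF N s0])
  also have "\<dots> \<le> ?a * (?a^k * (Qf N s0 0 + real k * ?b)) + ?b"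
    using Suc a1 by (intro add_right_mono mult_left_mono) (auto simp: mult.assoc)
  also have "\<dots> \<le> ?a * (?a^k * (Qf N s0 0 + real k * ?b)) + ?a^(Suc k) * ?b"
  proof -
    have "1 \<le> ?a^(Suc k)" using a1 by (rule one_le_power)
    then have "1 * ?b \<le> ?a^(Suc k) * ?b" using b0 by (rule mult_right_mono)
    then show ?thesis by simp
  qed
  also have "\<dots> = ?a^(Suc k) * (Qf N s0 0 + real (Suc k) * ?b)" unfolding alg_pow by simp
  finally show ?case by (simp add: mult.assoc)
qed

lemma Q0: "Qf N (0, D) 0 = (real D / real N - d0)^2"
  unfolding Qf_def errf_def dd_def using beta0 phic_neg[of 0] by simp

lemma Q_final:
  assumes N: "N0 \<le> N" and D: "D \<le> N" and T: "0 \<le> T" and k: "real k \<le> real N * T"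
  shows "Qf N (0, D) k \<le> exp (C1 * T) * ((real D / real N - d0)^2 + T * C2 / real N)"
proof -
  have N2: "2 \<le> N" using N0(1)[OF N] .
  have Np: "0 < real N" using N2 by simp
  have kT: "real k / real N \<le> T" using k Np by (simp add: divide_le_eq mult.commute)
  have q1: "Qf N (0, D) k \<le> (1 + C1 / real N)^k * (Qf N (0, D) 0 + real k * C2 / (real N)^2)"
    by (rule Q_bound[OF N]) (use D in simp)
  have q2: "(1 + C1 / real N)^k \<le> exp (C1 * T)"
  proof -
    have "(1 + C1 / real N)^k \<le> (exp (C1 / real N))^k"
      using C1_nonneg Np by (intro power_mono) auto
    also have "\<dots> = exp (C1 * (real k / real N))" by (simp add: exp_of_nat_mult[symmetric] algebra_simps)
    also have "\<dots> \<le> exp (C1 * T)" using mult_left_mono[OF kT C1_nonneg] by simp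
    finally show ?thesis .
  qed
  have q3: "Qf N (0, D) 0 + real k * C2 / (real N)^2 \<le> (real D / real N - d0)^2 + T * C2 / real N"
  proof -
    have "real k * C2 / (real N)^2 = (real k / real N) * C2 / real N" by (simp add: power2_eq_square)
    also have "\<dots> \<le> T * C2 / real N" using kT C2_nonneg Np by (intro divide_right_mono mult_right_mono) auto
    finally show ?thesis unfolding Q0 by simp
  qed
  have q4: "0 \<le> Qf N (0, D) 0 + real k * C2 / (real N)^2"
    using C2_nonneg unfolding Q0 by simp
  have "(1 + C1 / real N)^k * (Qf N (0, D) 0 + real k * C2 / (real N)^2)
        \<le> exp (C1 * T) * ((real D / real N - d0)^2 + T * C2 / real N)"
    by (rule mult_mono[OF q2 q3]) (use q4 in auto)
  then show ?thesis using q1 by linarith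
qed

end

context hiltF begin

lemma beta_mono: assumes "0 \<le> s" "s \<le> t" shows "beta s \<le> beta t"
proof (rule DERIV_nonneg_imp_nondecreasing[OF assms(2)])
  fix x assume "s \<le> x" "x \<le> t"
  then have x: "0 \<le> x" using assms by simp
  have "(beta has_real_derivative phic (beta x)) (at x)" using beta_deriv[of x] a0 x by simp
  moreover have "0 \<le> phic (beta x)" using bd_range(2)[OF x] unfolding dd_def by simp
  ultimately show "\<exists>y. (beta has_real_derivative y) (at x) \<and> 0 \<le> y" by blast
qed

lemma a_eq: "0 \<le> t \<Longrightarrow> beta t + dd t = 1 - (1 - d0) * (1 - F (\<Gamma> * beta t))"
  unfolding dd_def using phic_in[OF bd_range(1)] by simp

lemma a_mono: assumes "0 \<le> s" "s \<le> t" shows "beta s + dd s \<le> beta t + dd t"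
proof -
  have "F (\<Gamma> * beta s) \<le> F (\<Gamma> * beta t)"
    using beta_mono[OF assms] \<Gamma> by (intro F_mono mult_left_mono) auto
  have t0: "0 \<le> t" using assms by simp
  have "(1 - d0) * (1 - F (\<Gamma> * beta t)) \<le> (1 - d0) * (1 - F (\<Gamma> * beta s))"
    using \<open>F (\<Gamma> * beta s) \<le> F (\<Gamma> * beta t)\<close> d0 by (intro mult_left_mono) auto
  then show ?thesis unfolding a_eq[OF assms(1)] a_eq[OF t0] by simp
qed

lemma nat_floor_le: "0 \<le> (x::real) \<Longrightarrow> real (nat \<lfloor>x\<rfloor>) \<le> x"
proof -
  assume "0 \<le> x"
  then have "0 \<le> \<lfloor>x\<rfloor>" by simp
  then have "real (nat \<lfloor>x\<rfloor>) = real_of_int \<lfloor>x\<rfloor>" by simp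
  also have "\<dots> \<le> x" by (rule of_int_floor_le)
  finally show ?thesis .
qed

lemma floor_close: assumes "0 \<le> u" "0 < N" shows "\<bar>real (nat \<lfloor>N * u\<rfloor>) / N - u\<bar> \<le> 1 / N"
proof -
  have nu: "0 \<le> N * u" using assms by simp
  have a: "real (nat \<lfloor>N * u\<rfloor>) = real_of_int \<lfloor>N * u\<rfloor>" using nu by simp
  have "real_of_int \<lfloor>N * u\<rfloor> \<le> N * u" "N * u - 1 < real_of_int \<lfloor>N * u\<rfloor>" by linarith+
  then have "real_of_int \<lfloor>N * u\<rfloor> / N \<le> (N * u) / N" "(N * u - 1) / N \<le> real_of_int \<lfloor>N * u\<rfloor> / N"
    using divide_right_mono[of _ _ N] assms(2) by (meson less_eq_real_def)+
  moreover have "(N * u) / N = u" "(N * u - 1) / N = u - 1 / N" using assms by (auto simp: diff_divide_distrib)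
  ultimately have "real (nat \<lfloor>N * u\<rfloor>) / N \<le> u" "u - 1 / N \<le> real (nat \<lfloor>N * u\<rfloor>) / N"
    unfolding a by linarith+
  then show ?thesis by (simp add: abs_le_iff)
qed

definition Kg :: real where "Kg = 3 + Ld"

lemma pathwise:
  fixes N Mg n :: nat and T \<delta> :: real and xs :: "(nat \<times> nat) list"
  assumes N2: "2 \<le> N" and Mg: "1 \<le> Mg" and T: "0 < T" and n: "n = nat \<lfloor>real N * T\<rfloor>"
    and mono: "\<And>i i'. i \<le> i' \<Longrightarrow> i' \<le> n \<Longrightarrow>
        fst (xs ! i) \<le> fst (xs ! i') \<and> fst (xs ! i) + snd (xs ! i) \<le> fst (xs ! i') + snd (xs ! i')"
    and grid: "\<And>i. i \<le> Mg \<Longrightarrow> errf N (real (nat \<lfloor>real N * (real i * T / real Mg)\<rfloor>) / real N)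
                    (xs ! nat \<lfloor>real N * (real i * T / real Mg)\<rfloor>) \<le> \<delta>^2"
    and \<delta>: "0 \<le> \<delta>" and u: "u \<in> {0..T}"
  shows "dist (real (fst (xs ! nat \<lfloor>real N * u\<rfloor>)) / real N, real (snd (xs ! nat \<lfloor>real N * u\<rfloor>)) / real N)
              (beta u, dd u) \<le> 4 * \<delta> + Kg / real N + Kg * T / real Mg"
proof -
  have Np: "0 < real N" using N2 by simp
  have Mp: "0 < real Mg" using Mg by simp
  define ug where "ug i = real i * T / real Mg" for i :: nat
  define kg where "kg i = nat \<lfloor>real N * ug i\<rfloor>" for i :: nat
  define B where "B k = real (fst (xs ! k)) / real N" for k
  define A where "A k = real (fst (xs ! k) + snd (xs ! k)) / real N" for k
  define a where "a t = beta t + dd t" for t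
  have ug0: "0 \<le> ug i" for i unfolding ug_def using T Mp by simp
  have ugT: "ug i \<le> T" if "i \<le> Mg" for i
    unfolding ug_def using that T Mp by (simp add: field_simps mult_right_mono)
  have ugmono: "ug i \<le> ug i'" if "i \<le> i'" for i i'
    unfolding ug_def using that T Mp by (simp add: divide_right_mono mult_right_mono)
  have ugstep: "ug (Suc i) - ug i = T / real Mg" for i unfolding ug_def by (simp add: add_divide_distrib algebra_simps)
  have kmono: "nat \<lfloor>real N * x\<rfloor> \<le> nat \<lfloor>real N * y\<rfloor>" if "x \<le> y" for x y
    using that Np by (intro nat_mono floor_mono mult_left_mono) auto
  have kn: "nat \<lfloor>real N * x\<rfloor> \<le> n" if "x \<le> T" for x unfolding n using kmono[OF that] .
  have gerr: "\<bar>B (kg i) - beta (real (kg i) / real N)\<bar> \<le> \<delta> \<and> \<bar>A (kg i) - a (real (kg i) / real N)\<bar> \<le> 2 * \<delta>"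
    if "i \<le> Mg" for i
  proof -
    let ?t = "real (kg i) / real N"
    have e: "errf N ?t (xs ! kg i) \<le> \<delta>^2" using grid[OF that] unfolding kg_def ug_def .
    let ?x = "real (fst (xs ! kg i)) / real N - beta ?t" and ?y = "real (snd (xs ! kg i)) / real N - dd ?t"
    have s1: "?x^2 \<le> \<delta>^2" using e zero_le_power2[of ?y] unfolding errf_def by linarith
    have s2: "?y^2 \<le> \<delta>^2" using e zero_le_power2[of ?x] unfolding errf_def by linarith
    have x: "\<bar>?x\<bar> \<le> \<delta>" using abs_le_square_iff[of ?x \<delta>] s1 \<delta> by simp
    have y: "\<bar>?y\<bar> \<le> \<delta>" using abs_le_square_iff[of ?y \<delta>] s2 \<delta> by simp
    have "A (kg i) - a ?t = ?x + ?y" unfolding A_def a_def by (simp add: add_divide_distrib)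
    then have "\<bar>A (kg i) - a ?t\<bar> \<le> 2 * \<delta>" using x y abs_triangle_ineq[of ?x ?y] by linarith
    moreover have "B (kg i) - beta ?t = ?x" unfolding B_def ..
    ultimately show ?thesis using x by simp
  qed
  define i where "i = min (Mg - 1) (nat \<lfloor>u * real Mg / T\<rfloor>)"
  have iM: "i < Mg" "Suc i \<le> Mg" unfolding i_def using Mg by auto
  have ui: "ug i \<le> u"
  proof -
    have "real i \<le> u * real Mg / T"
    proof -
      have "real i \<le> real (nat \<lfloor>u * real Mg / T\<rfloor>)" unfolding i_def by simp
      also have "\<dots> \<le> u * real Mg / T" using u T Mp by (intro nat_floor_le) simp
      finally show ?thesis .
    qed
    then show ?thesis unfolding ug_def using T Mp by (simp add: field_simps)
  qed
  have ui1: "u \<le> ug (Suc i)"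
  proof (cases "nat \<lfloor>u * real Mg / T\<rfloor> \<le> Mg - 1")
    case True
    then have i: "i = nat \<lfloor>u * real Mg / T\<rfloor>" unfolding i_def by simp
    have "u * real Mg / T < real (Suc i)"
    proof -
      have lt: "u * real Mg / T < real_of_int \<lfloor>u * real Mg / T\<rfloor> + 1" by linarith
      have "0 \<le> u * real Mg / T" using u T Mp by simp
      then have "real (Suc i) = real_of_int \<lfloor>u * real Mg / T\<rfloor> + 1" unfolding i by simp
      then show ?thesis using lt by linarith
    qed
    then show ?thesis unfolding ug_def using T Mp by (simp add: field_simps)
  next
    case False
    then have "i = Mg - 1" unfolding i_def by simp
    then have "real (Suc i) = real Mg" using Mg by simp
    then show ?thesis unfolding ug_def using u Mp by simp
  qed
  define k where "k = nat \<lfloor>real N * u\<rfloor>"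
  have k1: "kg i \<le> k" unfolding kg_def k_def by (rule kmono[OF ui])
  have k2: "k \<le> kg (Suc i)" unfolding kg_def k_def by (rule kmono[OF ui1])
  have k2n: "kg (Suc i) \<le> n" unfolding kg_def by (rule kn[OF ugT[OF iM(2)]])
  have u0: "0 \<le> u" using u by simp
  note m1 = mono[OF k1 order.trans[OF k2 k2n]]
  note m2 = mono[OF k2 k2n]
  have Bm: "B (kg i) \<le> B k" "B k \<le> B (kg (Suc i))"
    using m1 m2 unfolding B_def using Np by (auto simp: divide_right_mono)
  have Am: "A (kg i) \<le> A k" "A k \<le> A (kg (Suc i))"
    using m1 m2 unfolding A_def using Np by (auto simp: divide_right_mono)
  have ti: "\<bar>real (kg j) / real N - ug j\<bar> \<le> 1 / real N" for j
    unfolding kg_def by (rule floor_close[OF ug0 Np])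
  have tk0: "0 \<le> real (kg j) / real N" for j by simp
  have bl: "\<bar>beta s - beta t\<bar> \<le> \<bar>s - t\<bar>" if "0 \<le> s" "0 \<le> t" for s t using beta_lip that .
  have al: "\<bar>a s - a t\<bar> \<le> (1 + Ld) * \<bar>s - t\<bar>" if "0 \<le> s" "0 \<le> t" for s t
  proof -
    have "\<bar>a s - a t\<bar> \<le> \<bar>beta s - beta t\<bar> + \<bar>dd s - dd t\<bar>" unfolding a_def by simp
    also have "\<dots> \<le> \<bar>s - t\<bar> + Ld * \<bar>s - t\<bar>" using bl[OF that] dd_lip[OF that] by linarith
    finally show ?thesis by (simp add: algebra_simps)
  qed
  have bm: "beta (ug i) \<le> beta u" "beta u \<le> beta (ug (Suc i))"
    using beta_mono[OF ug0 ui] beta_mono[OF u0 ui1] by auto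
  have am: "a (ug i) \<le> a u" "a u \<le> a (ug (Suc i))"
    unfolding a_def using a_mono[OF ug0 ui] a_mono[OF u0 ui1] by auto
  have stepT: "\<bar>ug (Suc i) - ug i\<bar> = T / real Mg" using ugstep[of i] T Mp by simp
  have gi: "\<bar>B (kg i) - beta (real (kg i) / real N)\<bar> \<le> \<delta>" "\<bar>A (kg i) - a (real (kg i) / real N)\<bar> \<le> 2 * \<delta>"
    using gerr[of i] iM by auto
  have gi1: "\<bar>B (kg (Suc i)) - beta (real (kg (Suc i)) / real N)\<bar> \<le> \<delta>"
       "\<bar>A (kg (Suc i)) - a (real (kg (Suc i)) / real N)\<bar> \<le> 2 * \<delta>"
    using gerr[of "Suc i"] iM by auto
  have Berr: "\<bar>B k - beta u\<bar> \<le> \<delta> + 1 / real N + T / real Mg"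
  proof -
    have p1: "\<bar>beta (real (kg (Suc i)) / real N) - beta (ug (Suc i))\<bar> \<le> 1 / real N"
      using bl[OF tk0 ug0] ti by (meson order_trans)
    have p2: "\<bar>beta (real (kg i) / real N) - beta (ug i)\<bar> \<le> 1 / real N"
      using bl[OF tk0 ug0] ti by (meson order_trans)
    have p3: "\<bar>beta (ug (Suc i)) - beta (ug i)\<bar> \<le> T / real Mg" using bl[OF ug0 ug0] stepT by metis
    show ?thesis using Bm bm gi gi1 p1 p2 p3 by (auto simp: abs_le_iff)
  qed
  have Aerr: "\<bar>A k - a u\<bar> \<le> 2 * \<delta> + (1 + Ld) / real N + (1 + Ld) * T / real Mg"
  proof -
    have L0: "0 \<le> 1 + Ld" using Ld_nonneg by simp
    have p1: "\<bar>a (real (kg (Suc i)) / real N) - a (ug (Suc i))\<bar> \<le> (1 + Ld) / real N"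
      using al[OF tk0 ug0] mult_left_mono[OF ti L0] by (metis order_trans times_divide_eq_right mult_1_right)
    have p2: "\<bar>a (real (kg i) / real N) - a (ug i)\<bar> \<le> (1 + Ld) / real N"
      using al[OF tk0 ug0] mult_left_mono[OF ti L0] by (metis order_trans times_divide_eq_right mult_1_right)
    have p3: "\<bar>a (ug (Suc i)) - a (ug i)\<bar> \<le> (1 + Ld) * T / real Mg"
      using al[OF ug0 ug0, of "Suc i" i] stepT by simp
    show ?thesis using Am am gi gi1 p1 p2 p3 by (auto simp: abs_le_iff)
  qed
  have Derr: "\<bar>real (snd (xs ! k)) / real N - dd u\<bar> \<le> \<bar>A k - a u\<bar> + \<bar>B k - beta u\<bar>"
  proof -
    have "real (snd (xs ! k)) / real N - dd u = (A k - a u) - (B k - beta u)"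
      unfolding A_def B_def a_def by (simp add: add_divide_distrib)
    then show ?thesis using abs_triangle_ineq4 by metis
  qed
  have "dist (B k, real (snd (xs ! k)) / real N) (beta u, dd u)
        = sqrt ((B k - beta u)^2 + (real (snd (xs ! k)) / real N - dd u)^2)"
    by (simp add: dist_Pair_Pair dist_real_def)
  also have "\<dots> \<le> \<bar>B k - beta u\<bar> + \<bar>real (snd (xs ! k)) / real N - dd u\<bar>"
    by (rule sqrt_sum_squares_le_sum_abs)
  also have "\<dots> \<le> 4 * \<delta> + Kg / real N + Kg * T / real Mg"
  proof -
    have "\<bar>B k - beta u\<bar> + \<bar>real (snd (xs ! k)) / real N - dd u\<bar>
          \<le> (\<delta> + 1 / real N + T / real Mg) + ((2 * \<delta> + (1 + Ld) / real N + (1 + Ld) * T / real Mg) + (\<delta> + 1 / real N + T / real Mg))"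
      using Berr Aerr Derr by linarith
    also have "\<dots> = 4 * \<delta> + Kg / real N + Kg * T / real Mg" unfolding Kg_def using Np Mp by (simp add: field_simps)
    finally show ?thesis .
  qed
  finally show ?thesis unfolding B_def k_def .
qed

end

lemma pmf_markov:
  assumes fin: "finite (set_pmf p)" and nn: "\<And>x. 0 \<le> g x" and c: "0 < c"
  shows "measure_pmf.prob p {x. c < g x} \<le> E p g / c"
proof -
  have "measure_pmf.prob p {x. c < g x} \<le> measure_pmf.prob p {x \<in> space (measure_pmf p). c \<le> g x}"
    by (intro measure_pmf.finite_measure_mono) auto
  also have "\<dots> \<le> E p g / c"
    by (rule integral_Markov_inequality_measure[where A = UNIV]) (use fin nn c in \<open>auto intro: fin_int\<close>)
  finally show ?thesis .
qed

context hiltF begin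

lemma prob_bound:
  fixes D0 :: "nat \<Rightarrow> nat" and N Mg :: nat and T \<epsilon> \<delta> :: real
  assumes N: "N0 \<le> N" and D: "D0 N \<le> N" and T: "0 < T" and Mg: "1 \<le> Mg" and \<delta>: "0 < \<delta>"
    and small: "4 * \<delta> + Kg / real N + Kg * T / real Mg < \<epsilon>"
  shows "measure_pmf.prob (hilt_path F \<Gamma> N (0, D0 N) (nat \<lfloor>real N * T\<rfloor>))
          {xs. (SUP u\<in>{0..T}. dist (real (fst (xs ! nat \<lfloor>real N * u\<rfloor>)) / real N,
                                     real (snd (xs ! nat \<lfloor>real N * u\<rfloor>)) / real N) (beta u, dd u)) > \<epsilon>}
        \<le> (real Mg + 1) * (exp (C1 * T) * ((real (D0 N) / real N - d0)^2 + T * C2 / real N)) / \<delta>^2"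
proof -
  have N2: "2 \<le> N" using N0(1)[OF N] .
  have Np: "0 < real N" using N2 by simp
  define n where "n = nat \<lfloor>real N * T\<rfloor>"
  define s0 where "s0 = (0::nat, D0 N)"
  have s0v: "fst s0 + snd s0 \<le> N" unfolding s0_def using D by simp
  define p where "p = hilt_path F \<Gamma> N s0 n"
  define kk where "kk i = nat \<lfloor>real N * (real i * T / real Mg)\<rfloor>" for i :: nat
  define Bad where "Bad i = {xs. \<delta>^2 < errf N (real (kk i) / real N) (xs ! kk i)}" for i
  define S where "S = {xs. (SUP u\<in>{0..T}. dist (real (fst (xs ! nat \<lfloor>real N * u\<rfloor>)) / real N,
                                     real (snd (xs ! nat \<lfloor>real N * u\<rfloor>)) / real N) (beta u, dd u)) > \<epsilon>}"
  define bnd where "bnd = exp (C1 * T) * ((real (D0 N) / real N - d0)^2 + T * C2 / real N)"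
  have Mp: "0 < real Mg" using Mg by simp
  have kkT: "real (kk i) \<le> real N * T" if "i \<le> Mg" for i
  proof -
    have "real i * T / real Mg \<le> T" using that T Mp by (simp add: field_simps mult_right_mono)
    from mult_left_mono[OF this, of "real N"] have "real N * (real i * T / real Mg) \<le> real N * T" using Np by linarith
    moreover have "real (kk i) \<le> real N * (real i * T / real Mg)"
      unfolding kk_def by (rule nat_floor_le) (use T Mp in simp)
    ultimately show ?thesis by simp
  qed
  have kkn: "kk i \<le> n" if "i \<le> Mg" for i
  proof -
    have "real i * T / real Mg \<le> T" using that T Mp by (simp add: field_simps mult_right_mono)
    from mult_left_mono[OF this, of "real N"] have "real N * (real i * T / real Mg) \<le> real N * T" using Np by linarith
    then show ?thesis unfolding kk_def n_def by (intro nat_mono floor_mono)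
  qed
  have sub: "S \<inter> set_pmf p \<subseteq> (\<Union>i\<in>{..Mg}. Bad i)"
  proof
    fix xs assume xs: "xs \<in> S \<inter> set_pmf p"
    show "xs \<in> (\<Union>i\<in>{..Mg}. Bad i)"
    proof (rule ccontr)
      assume "xs \<notin> (\<Union>i\<in>{..Mg}. Bad i)"
      then have grid: "\<And>i. i \<le> Mg \<Longrightarrow> errf N (real (kk i) / real N) (xs ! kk i) \<le> \<delta>^2"
        unfolding Bad_def by force
      have xsp: "xs \<in> set_pmf (hilt_path F \<Gamma> N s0 n)" using xs unfolding p_def by simp
      have pw: "dist (real (fst (xs ! nat \<lfloor>real N * u\<rfloor>)) / real N, real (snd (xs ! nat \<lfloor>real N * u\<rfloor>)) / real N)
              (beta u, dd u) \<le> 4 * \<delta> + Kg / real N + Kg * T / real Mg" if u: "u \<in> {0..T}" for u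
      proof (rule pathwise[OF N2 Mg T n_def _ _ _ u])
        fix i i' :: nat assume "i \<le> i'" "i' \<le> n"
        then show "fst (xs ! i) \<le> fst (xs ! i') \<and> fst (xs ! i) + snd (xs ! i) \<le> fst (xs ! i') + snd (xs ! i')"
          by (rule path_mono[OF N2 s0v xsp])
      next
        fix i assume "i \<le> Mg"
        then show "errf N (real (nat \<lfloor>real N * (real i * T / real Mg)\<rfloor>) / real N)
                    (xs ! nat \<lfloor>real N * (real i * T / real Mg)\<rfloor>) \<le> \<delta>^2"
          using grid unfolding kk_def by blast
      next
        show "0 \<le> \<delta>" using \<delta> by simp
      qed
      have "(SUP u\<in>{0..T}. dist (real (fst (xs ! nat \<lfloor>real N * u\<rfloor>)) / real N,
                                     real (snd (xs ! nat \<lfloor>real N * u\<rfloor>)) / real N) (beta u, dd u))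
            \<le> 4 * \<delta> + Kg / real N + Kg * T / real Mg"
        by (rule cSUP_least) (use T pw in auto)
      moreover have "xs \<in> S" using xs by simp
      ultimately show False unfolding S_def using small by simp
    qed
  qed
  have bad_bound: "measure_pmf.prob p (Bad i) \<le> bnd / \<delta>^2" if i: "i \<le> Mg" for i
  proof -
    have "measure_pmf.prob p (Bad i) = measure_pmf.prob (map_pmf (\<lambda>xs. xs ! kk i) p)
            {s. \<delta>^2 < errf N (real (kk i) / real N) s}"
      unfolding Bad_def by (simp add: vimage_def)
    also have "map_pmf (\<lambda>xs. xs ! kk i) p = chainp N s0 (kk i)"
      unfolding p_def by (rule path_nth[OF kkn[OF i]])
    also have "measure_pmf.prob (chainp N s0 (kk i)) {s. \<delta>^2 < errf N (real (kk i) / real N) s}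
               \<le> E (chainp N s0 (kk i)) (errf N (real (kk i) / real N)) / \<delta>^2"
      by (rule pmf_markov) (use chain_supp[OF N2 s0v] \<delta> errf_nonneg in auto)
    also have "E (chainp N s0 (kk i)) (errf N (real (kk i) / real N)) = Qf N s0 (kk i)"
      unfolding Qf_def ..
    also have "Qf N s0 (kk i) \<le> bnd"
      unfolding s0_def bnd_def by (rule Q_final[OF N D _ kkT[OF i]]) (use T in simp)
    finally show ?thesis using \<delta> by (simp add: divide_right_mono)
  qed
  have "measure_pmf.prob p S = measure_pmf.prob p (S \<inter> set_pmf p)" by (simp add: measure_Int_set_pmf)
  also have "\<dots> \<le> measure_pmf.prob p (\<Union>i\<in>{..Mg}. Bad i)"
    by (rule measure_pmf.finite_measure_mono[OF sub]) simp
  also have "\<dots> \<le> (\<Sum>i\<in>{..Mg}. measure_pmf.prob p (Bad i))"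
    by (rule measure_pmf.finite_measure_subadditive_finite) auto
  also have "\<dots> \<le> (\<Sum>i\<in>{..Mg}. bnd / \<delta>^2)" by (rule sum_mono) (use bad_bound in auto)
  also have "\<dots> = (real Mg + 1) * bnd / \<delta>^2" by simp
  finally show ?thesis unfolding p_def s0_def n_def S_def bnd_def by simp
qed

end

context hiltF begin

lemma Kg_pos: "0 < Kg" unfolding Kg_def using Ld_nonneg by simp

lemma main_conv:
  fixes D0 :: "nat \<Rightarrow> nat"
  assumes D0_le: "\<forall>N. D0 N \<le> N" and D0_lim: "(\<lambda>N. real (D0 N) / real N) \<longlonglongrightarrow> d0"
    and T: "0 < T" and \<epsilon>: "0 < \<epsilon>"
  shows "(\<lambda>N. measure_pmf.prob (hilt_path F \<Gamma> N (0, D0 N) (nat \<lfloor>real N * T\<rfloor>))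
          {xs. (SUP u\<in>{0..T}. dist (real (fst (xs ! nat \<lfloor>real N * u\<rfloor>)) / real N,
                                     real (snd (xs ! nat \<lfloor>real N * u\<rfloor>)) / real N) (beta u, dd u)) > \<epsilon>})
         \<longlonglongrightarrow> 0"
proof -
  define \<delta> where "\<delta> = \<epsilon> / 16"
  define Mg where "Mg = nat \<lceil>4 * Kg * T / \<epsilon>\<rceil> + 1"
  define N1 where "N1 = max N0 (nat \<lceil>4 * Kg / \<epsilon>\<rceil> + 1)"
  have \<delta>: "0 < \<delta>" unfolding \<delta>_def using \<epsilon> by simp
  have Mg: "1 \<le> Mg" unfolding Mg_def by simp
  have Mp: "0 < real Mg" using Mg by simp
  have Kp: "0 < Kg" by (rule Kg_pos)
  have MgT: "Kg * T / real Mg < \<epsilon> / 4"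
  proof -
    have "4 * Kg * T / \<epsilon> \<le> real (nat \<lceil>4 * Kg * T / \<epsilon>\<rceil>)" by (rule real_nat_ceiling_ge)
    then have "4 * Kg * T / \<epsilon> < real Mg" unfolding Mg_def by simp
    then have "4 * Kg * T < real Mg * \<epsilon>" using \<epsilon> by (simp add: divide_less_eq)
    then show ?thesis using Mp \<epsilon> by (simp add: divide_less_eq mult.commute)
  qed
  define bound where "bound N = (real Mg + 1) * (exp (C1 * T) * ((real (D0 N) / real N - d0)^2 + T * C2 / real N)) / \<delta>^2" for N :: nat
  have ev: "eventually (\<lambda>N. measure_pmf.prob (hilt_path F \<Gamma> N (0, D0 N) (nat \<lfloor>real N * T\<rfloor>))
          {xs. (SUP u\<in>{0..T}. dist (real (fst (xs ! nat \<lfloor>real N * u\<rfloor>)) / real N,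
                                     real (snd (xs ! nat \<lfloor>real N * u\<rfloor>)) / real N) (beta u, dd u)) > \<epsilon>} \<le> bound N) sequentially"
    unfolding eventually_sequentially
  proof (intro exI allI impI)
    fix N assume N: "N1 \<le> N"
    have N0N: "N0 \<le> N" using N unfolding N1_def by simp
    have Np: "0 < real N" using N0(1)[OF N0N] by simp
    have KN: "Kg / real N < \<epsilon> / 4"
    proof -
      have "4 * Kg / \<epsilon> \<le> real (nat \<lceil>4 * Kg / \<epsilon>\<rceil>)" by (rule real_nat_ceiling_ge)
      also have "real (nat \<lceil>4 * Kg / \<epsilon>\<rceil>) < real N" using N unfolding N1_def by simp
      finally have "4 * Kg < real N * \<epsilon>" using \<epsilon> by (simp add: divide_less_eq)
      then show ?thesis using Np \<epsilon> by (simp add: divide_less_eq mult.commute)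
    qed
    have small: "4 * \<delta> + Kg / real N + Kg * T / real Mg < \<epsilon>"
      using KN MgT \<epsilon> unfolding \<delta>_def by linarith
    show "measure_pmf.prob (hilt_path F \<Gamma> N (0, D0 N) (nat \<lfloor>real N * T\<rfloor>))
          {xs. (SUP u\<in>{0..T}. dist (real (fst (xs ! nat \<lfloor>real N * u\<rfloor>)) / real N,
                                     real (snd (xs ! nat \<lfloor>real N * u\<rfloor>)) / real N) (beta u, dd u)) > \<epsilon>} \<le> bound N"
      unfolding bound_def by (rule prob_bound[OF N0N _ T Mg \<delta> small]) (use D0_le in simp)
  qed
  have lim: "bound \<longlonglongrightarrow> 0"
  proof -
    have "(\<lambda>N. (real (D0 N) / real N - d0)^2) \<longlonglongrightarrow> (d0 - d0)^2"
      by (intro tendsto_intros D0_lim)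
    moreover have "(\<lambda>N. T * C2 / real N) \<longlonglongrightarrow> 0" by (rule lim_const_over_n)
    ultimately have "(\<lambda>N. (real (D0 N) / real N - d0)^2 + T * C2 / real N) \<longlonglongrightarrow> 0"
      using tendsto_add[of "\<lambda>N. (real (D0 N) / real N - d0)^2" 0 sequentially "\<lambda>N. T * C2 / real N" 0] by simp
    then have "(\<lambda>N. (real Mg + 1) * (exp (C1 * T) * ((real (D0 N) / real N - d0)^2 + T * C2 / real N)) / \<delta>^2)
        \<longlonglongrightarrow> (real Mg + 1) * (exp (C1 * T) * 0) / \<delta>^2"
      using \<delta> by (intro tendsto_intros) auto
    then show ?thesis unfolding bound_def by simp
  qed
  show ?thesis
    by (rule tendsto_sandwich[OF _ ev tendsto_const lim]) simp
qed

end

theorem theorem1: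
  fixes M :: "real measure" and F f f' :: "real \<Rightarrow> real"
    and \<Gamma> \<Gamma>' d0 :: real and D0 :: "nat \<Rightarrow> nat"
  assumes M: "real_distribution M" and nonneg: "AE x in M. 0 \<le> x"
    and F_def: "F = cdf M"
    and \<Gamma>: "0 < \<Gamma>" "\<Gamma> \<le> 1" and F\<Gamma>: "F \<Gamma> < 1"
    and \<Gamma>': "\<Gamma> < \<Gamma>'"
    and dens_nonneg: "\<forall>x\<in>{0..\<Gamma>'}. 0 \<le> f x"
    and dens: "\<forall>x\<in>{0..\<Gamma>'}. (f has_integral F x) {0..x}"
    and fderiv: "\<forall>x\<in>{0..\<Gamma>'}. (f has_real_derivative f' x) (at x within {0..\<Gamma>'})"
    and fbdd: "\<exists>K. \<forall>x\<in>{0..\<Gamma>'}. \<bar>f' x\<bar> \<le> K"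
    and D0_le: "\<forall>N. D0 N \<le> N"
    and D0_lim: "(\<lambda>N. real (D0 N) / real N) \<longlonglongrightarrow> d0"
    and d0: "0 < d0" "d0 \<le> 1"
  shows "(\<exists>b d. hilt_ode_sol F f \<Gamma> d0 b d) \<and>
         (\<forall>b d b2 d2. hilt_ode_sol F f \<Gamma> d0 b d \<and> hilt_ode_sol F f \<Gamma> d0 b2 d2 \<longrightarrow>
            (\<forall>u\<ge>0. b u = b2 u \<and> d u = d2 u)) \<and>
         (\<forall>b d. hilt_ode_sol F f \<Gamma> d0 b d \<longrightarrow>
            (\<forall>T>0. \<forall>\<epsilon>>0.
               (\<lambda>N. measure_pmf.prob (hilt_path F \<Gamma> N (0, D0 N) (nat \<lfloor>real N * T\<rfloor>))
                  {xs. (SUP u\<in>{0..T}.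
                          dist (real (fst (xs ! nat \<lfloor>real N * u\<rfloor>)) / real N,
                                real (snd (xs ! nat \<lfloor>real N * u\<rfloor>)) / real N)
                               (b u, d u)) > \<epsilon>})
               \<longlonglongrightarrow> 0))"
proof -
  interpret hiltF M F f f' \<Gamma> \<Gamma>' d0
    by (intro hiltF.intro; (fact M F_def \<Gamma>(1) \<Gamma>(2) F\<Gamma> \<Gamma>' dens fderiv fbdd d0(1) d0(2)))
  have ex: "\<exists>b d. hilt_ode_sol F f \<Gamma> d0 b d" using sol_exists by blast
  have un: "\<forall>b d b2 d2. hilt_ode_sol F f \<Gamma> d0 b d \<and> hilt_ode_sol F f \<Gamma> d0 b2 d2 \<longrightarrow>
            (\<forall>u\<ge>0. b u = b2 u \<and> d u = d2 u)"
  proof (intro allI impI)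
    fix b d b2 d2 :: "real \<Rightarrow> real" and u :: real
    assume s: "hilt_ode_sol F f \<Gamma> d0 b d \<and> hilt_ode_sol F f \<Gamma> d0 b2 d2" and u: "0 \<le> u"
    have "b u = beta u \<and> d u = phic (beta u)" using sol_unique[OF conjunct1[OF s] u] .
    moreover have "b2 u = beta u \<and> d2 u = phic (beta u)" using sol_unique[OF conjunct2[OF s] u] .
    ultimately show "b u = b2 u \<and> d u = d2 u" by simp
  qed
  have cv: "\<forall>b d. hilt_ode_sol F f \<Gamma> d0 b d \<longrightarrow>
            (\<forall>T>0. \<forall>\<epsilon>>0.
               (\<lambda>N. measure_pmf.prob (hilt_path F \<Gamma> N (0, D0 N) (nat \<lfloor>real N * T\<rfloor>))
                  {xs. (SUP u\<in>{0..T}.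
                          dist (real (fst (xs ! nat \<lfloor>real N * u\<rfloor>)) / real N,
                                real (snd (xs ! nat \<lfloor>real N * u\<rfloor>)) / real N)
                               (b u, d u)) > \<epsilon>})
               \<longlonglongrightarrow> 0)"
  proof (intro allI impI)
    fix b d :: "real \<Rightarrow> real" and T \<epsilon> :: real assume sol: "hilt_ode_sol F f \<Gamma> d0 b d" and T: "0 < T" and \<epsilon>: "0 < \<epsilon>"
    have bd: "b u = beta u \<and> d u = dd u" if "u \<in> {0..T}" for u
      using sol_unique[OF sol, of u] that unfolding dd_def by simp
    have eq: "(SUP u\<in>{0..T}. dist (real (fst (xs ! nat \<lfloor>real N * u\<rfloor>)) / real N,
                                real (snd (xs ! nat \<lfloor>real N * u\<rfloor>)) / real N) (b u, d u))
            = (SUP u\<in>{0..T}. dist (real (fst (xs ! nat \<lfloor>real N * u\<rfloor>)) / real N,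
                                real (snd (xs ! nat \<lfloor>real N * u\<rfloor>)) / real N) (beta u, dd u))"
      for xs :: "(nat \<times> nat) list" and N :: nat
      by (rule SUP_cong[OF refl]) (simp add: bd)
    show "(\<lambda>N. measure_pmf.prob (hilt_path F \<Gamma> N (0, D0 N) (nat \<lfloor>real N * T\<rfloor>))
                  {xs. (SUP u\<in>{0..T}.
                          dist (real (fst (xs ! nat \<lfloor>real N * u\<rfloor>)) / real N,
                                real (snd (xs ! nat \<lfloor>real N * u\<rfloor>)) / real N)
                               (b u, d u)) > \<epsilon>})
               \<longlonglongrightarrow> 0"
      unfolding eq by (rule main_conv[OF D0_le D0_lim T \<epsilon>])
  qed
  show ?thesis using ex un cv by (intro conjI)
qed


end
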